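(* Let $\alpha\geqslant2$, $N_1,N_2\in2^{\mathbb{Z}}$ with $N_2\ll N_1$ and $N_1\gtrsim1$, $L_1,L_2\in2^{\mathbb{N}_0}$, and $D^*\in2^{\mathbb{N}}$. Let $f_{i,N_i,L_i}$, $i=1,2$, be functions on $\mathbb{R}\times\mathbb{R}\times\mathbb{Z}$ with $\mathrm{supp}(f_{i,N_i,L_i})\subseteq D_{N_i,L_i}$ and such that $|\frac{\eta_1}{\xi_1}-\frac{\eta_2}{\xi_2}|\lesssim D^*$ for all $(\xi_i,\eta_i)\in\pi_{\xi,\eta}(\mathrm{supp}f_{i,N_i,L_i})$. Then, with $L_{\min}=\min(L_1,L_2)$, $L_{\max}=\max(L_1,L_2)$, $$\|f_{1,N_1,L_1}*f_{2,N_2,L_2}\|_{L^2_{\tau,\xi,\eta}}\lesssim\log(D^* )\,N_2^{\frac12}L_{\min}^{\frac12}\langle L_{\max}/N_1^{\frac{\alpha}{2}}\rangle^{\frac12}\prod_{i=1}^2\|f_{i,N_i,L_i}\|_2.$$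
   Context: Functions are on $\mathbb{R}_\tau\times\mathbb{R}_\xi\times\mathbb{Z}_\eta$ with Lebesgue measure in $\tau,\xi$ and counting measure in $\eta$. $\omega_\alpha(\xi,\eta)=\xi|\xi|^\alpha+\frac{\eta^2}{\xi}$; $A_N=\{N/4\leqslant|\xi|\leqslant4N\}$; $D_{N,L}=\{(\tau,\xi,\eta):\xi\in A_N,\ |\tau-\omega_\alpha(\xi,\eta)|\leqslant L\}$; $\langle x\rangle=(1+x^2)^{1/2}$. *)

theory Defs
  imports "HOL-Analysis.Analysis"
begin

type_synonym pt = "real \<times> real \<times> int"

definition M3 :: "pt measure" where
  "M3 = lborel \<Otimes>\<^sub>M (lborel \<Otimes>\<^sub>M (count_space UNIV :: int measure))"

definition omega :: "real \<Rightarrow> real \<Rightarrow> int \<Rightarrow> real" where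
  "omega \<alpha> \<xi> \<eta> = \<xi> * \<bar>\<xi>\<bar> powr \<alpha> + (real_of_int \<eta>)\<^sup>2 / \<xi>"

definition A_set :: "real \<Rightarrow> real set" where
  "A_set N = {\<xi>. N / 4 \<le> \<bar>\<xi>\<bar> \<and> \<bar>\<xi>\<bar> \<le> 4 * N}"

definition D_set :: "real \<Rightarrow> real \<Rightarrow> real \<Rightarrow> pt set" where
  "D_set \<alpha> N L = {(\<tau>, \<xi>, \<eta>). \<xi> \<in> A_set N \<and> \<bar>\<tau> - omega \<alpha> \<xi> \<eta>\<bar> \<le> L}"

definition jb :: "real \<Rightarrow> real" where
  "jb x = sqrt (1 + x\<^sup>2)"

text \<open>Support = set where the function is nonzero (the sets D are closed, so
 this agrees with the closed support condition).\<close>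
definition supp3 :: "(pt \<Rightarrow> complex) \<Rightarrow> pt set" where
  "supp3 f = {x. f x \<noteq> 0}"

definition conv3 :: "(pt \<Rightarrow> complex) \<Rightarrow> (pt \<Rightarrow> complex) \<Rightarrow> pt \<Rightarrow> complex" where
  "conv3 f g = (\<lambda>(\<tau>, \<xi>, \<eta>). \<integral>y. (case y of (\<tau>1, \<xi>1, \<eta>1) \<Rightarrow>
       f (\<tau>1, \<xi>1, \<eta>1) * g (\<tau> - \<tau>1, \<xi> - \<xi>1, \<eta> - \<eta>1)) \<partial>M3)"

definition L2norm :: "(pt \<Rightarrow> complex) \<Rightarrow> real" where
  "L2norm f = sqrt (\<integral>x. (cmod (f x))\<^sup>2 \<partial>M3)"

definition in_L2 :: "(pt \<Rightarrow> complex) \<Rightarrow> bool" where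
  "in_L2 f \<longleftrightarrow> f \<in> borel_measurable M3 \<and> integrable M3 (\<lambda>x. (cmod (f x))\<^sup>2)"

definition dyadic_Z :: "real \<Rightarrow> bool" where
  "dyadic_Z N \<longleftrightarrow> (\<exists>k::int. N = 2 powr (real_of_int k))"

definition dyadic_N0 :: "real \<Rightarrow> bool" where
  "dyadic_N0 L \<longleftrightarrow> (\<exists>k::nat. L = 2 ^ k)"

definition dyadic_N :: "real \<Rightarrow> bool" where
  "dyadic_N D \<longleftrightarrow> (\<exists>k::nat. k \<ge> 1 \<and> D = 2 ^ k)"

end

theory Submission
  imports Defs
begin

lemma sf_count: "sigma_finite_measure (count_space (UNIV::int set))"
  by (rule sigma_finite_measure_count_space)

lemma sf_lb: "sigma_finite_measure (lborel::real measure)"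
  by (rule lborel.sigma_finite_measure_axioms)

lemma sf2: "sigma_finite_measure ((lborel::real measure) \<Otimes>\<^sub>M count_space (UNIV::int set))"
  by (intro sigma_finite_pair_measure sf_lb sf_count)

lemma sfM3: "sigma_finite_measure M3"
  unfolding M3_def by (intro sigma_finite_pair_measure sf_lb sf2)

lemma psfM3: "pair_sigma_finite M3 M3"
  by (intro pair_sigma_finite.intro sfM3)

definition sub3 :: "pt \<Rightarrow> pt \<Rightarrow> pt" where
  "sub3 x y = (fst x - fst y, fst (snd x) - fst (snd y), snd (snd x) - snd (snd y))"

lemma sub3_meas[measurable]: "(\<lambda>p. sub3 (fst p) (snd p)) \<in> measurable (M3 \<Otimes>\<^sub>M M3) M3"
  unfolding sub3_def M3_def by measurable

lemma sub3_meas1[measurable]: "(\<lambda>x. sub3 x y) \<in> measurable M3 M3"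
  unfolding sub3_def M3_def by measurable

lemma M3_iter:
  assumes h[measurable]: "h \<in> borel_measurable M3"
  shows "integral\<^sup>N M3 h = (\<integral>\<^sup>+\<tau>. \<integral>\<^sup>+\<xi>. \<integral>\<^sup>+\<eta>. h (\<tau>, \<xi>, \<eta>) \<partial>count_space UNIV \<partial>lborel \<partial>lborel)"
proof -
  have hm: "h \<in> borel_measurable (lborel \<Otimes>\<^sub>M (lborel \<Otimes>\<^sub>M count_space UNIV))"
    using h unfolding M3_def .
  have "integral\<^sup>N M3 h = (\<integral>\<^sup>+\<tau>. \<integral>\<^sup>+z. h (\<tau>, z) \<partial>(lborel \<Otimes>\<^sub>M count_space UNIV) \<partial>lborel)"
    unfolding M3_def using sigma_finite_measure.nn_integral_fst[OF sf2 hm] by simp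
  also have "\<dots> = (\<integral>\<^sup>+\<tau>. \<integral>\<^sup>+\<xi>. \<integral>\<^sup>+\<eta>. h (\<tau>, \<xi>, \<eta>) \<partial>count_space UNIV \<partial>lborel \<partial>lborel)"
  proof (rule nn_integral_cong)
    fix \<tau>
    have hm2: "(\<lambda>z. h (\<tau>, z)) \<in> borel_measurable (lborel \<Otimes>\<^sub>M count_space UNIV)"
      using hm by measurable
    show "(\<integral>\<^sup>+z. h (\<tau>, z) \<partial>(lborel \<Otimes>\<^sub>M count_space UNIV)) = (\<integral>\<^sup>+\<xi>. \<integral>\<^sup>+\<eta>. h (\<tau>, \<xi>, \<eta>) \<partial>count_space UNIV \<partial>lborel)"
      using sigma_finite_measure.nn_integral_fst[OF sf_count hm2] by simp
  qed
  finally show ?thesis .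
qed

lemma trans_inv:
  assumes g[measurable]: "g \<in> borel_measurable M3"
  shows "(\<integral>\<^sup>+x. g (sub3 x y) \<partial>M3) = integral\<^sup>N M3 g"
proof -
  obtain a b c where y: "y = (a, b, c)" by (cases y) auto
  have gm: "g \<in> borel_measurable (lborel \<Otimes>\<^sub>M (lborel \<Otimes>\<^sub>M count_space UNIV))"
    using g unfolding M3_def .
  have "(\<integral>\<^sup>+x. g (sub3 x y) \<partial>M3) = (\<integral>\<^sup>+\<tau>. \<integral>\<^sup>+\<xi>. \<integral>\<^sup>+\<eta>. g (\<tau> - a, \<xi> - b, \<eta> - c) \<partial>count_space UNIV \<partial>lborel \<partial>lborel)"
    using M3_iter[of "\<lambda>x. g (sub3 x y)"] sub3_meas1[of y] by (simp add: sub3_def y)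
  also have "\<dots> = (\<integral>\<^sup>+\<tau>. \<integral>\<^sup>+\<xi>. \<integral>\<^sup>+\<eta>. g (\<tau> - a, \<xi> - b, \<eta>) \<partial>count_space UNIV \<partial>lborel \<partial>lborel)"
  proof -
    have "\<And>\<tau> \<xi>. (\<integral>\<^sup>+\<eta>. g (\<tau> - a, \<xi> - b, \<eta> - c) \<partial>count_space UNIV) = (\<integral>\<^sup>+\<eta>. g (\<tau> - a, \<xi> - b, \<eta>) \<partial>count_space UNIV)"
    proof -
      fix \<tau> \<xi>
      have bij: "bij_betw (\<lambda>\<eta>::int. \<eta> - c) UNIV UNIV"
        by (rule bij_betwI[where g="\<lambda>\<eta>. \<eta> + c"]) auto
      show "?thesis \<tau> \<xi>"
        using nn_integral_bij_count_space[OF bij, of "\<lambda>\<eta>. g (\<tau> - a, \<xi> - b, \<eta>)"] by simp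
    qed
    then show ?thesis by simp
  qed
  also have "\<dots> = (\<integral>\<^sup>+\<tau>. \<integral>\<^sup>+\<xi>. \<integral>\<^sup>+\<eta>. g (\<tau> - a, \<xi>, \<eta>) \<partial>count_space UNIV \<partial>lborel \<partial>lborel)"
  proof -
    have "\<And>\<tau>. (\<integral>\<^sup>+\<xi>. \<integral>\<^sup>+\<eta>. g (\<tau> - a, \<xi> - b, \<eta>) \<partial>count_space UNIV \<partial>lborel) = (\<integral>\<^sup>+\<xi>. \<integral>\<^sup>+\<eta>. g (\<tau> - a, \<xi>, \<eta>) \<partial>count_space UNIV \<partial>lborel)"
    proof -
      fix \<tau>
      have m: "(\<lambda>\<xi>. \<integral>\<^sup>+\<eta>. g (\<tau> - a, \<xi>, \<eta>) \<partial>count_space UNIV) \<in> borel_measurable borel"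
      proof -
        have "(\<lambda>(\<xi>,\<eta>). g (\<tau> - a, \<xi>, \<eta>)) \<in> borel_measurable (lborel \<Otimes>\<^sub>M count_space UNIV)"
          using gm by measurable
        from sigma_finite_measure.borel_measurable_nn_integral[OF sf_count this]
        have "(\<lambda>\<xi>. \<integral>\<^sup>+\<eta>. g (\<tau> - a, \<xi>, \<eta>) \<partial>count_space UNIV) \<in> borel_measurable lborel"
          by simp
        then show ?thesis by (simp only: measurable_lborel2)
      qed
      show "?thesis \<tau>"
        using nn_integral_real_affine[OF m, of 1 "-b"] by simp
    qed
    then show ?thesis by simp
  qed
  also have "\<dots> = (\<integral>\<^sup>+\<tau>. \<integral>\<^sup>+\<xi>. \<integral>\<^sup>+\<eta>. g (\<tau>, \<xi>, \<eta>) \<partial>count_space UNIV \<partial>lborel \<partial>lborel)"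
  proof -
    have m: "(\<lambda>\<tau>. \<integral>\<^sup>+\<xi>. \<integral>\<^sup>+\<eta>. g (\<tau>, \<xi>, \<eta>) \<partial>count_space UNIV \<partial>lborel) \<in> borel_measurable borel"
    proof -
      have e: "\<And>\<tau>. (\<integral>\<^sup>+\<xi>. \<integral>\<^sup>+\<eta>. g (\<tau>, \<xi>, \<eta>) \<partial>count_space UNIV \<partial>lborel) = (\<integral>\<^sup>+z. g (\<tau>, z) \<partial>(lborel \<Otimes>\<^sub>M count_space UNIV))"
      proof -
        fix \<tau>
        have hm2: "(\<lambda>z. g (\<tau>, z)) \<in> borel_measurable (lborel \<Otimes>\<^sub>M count_space UNIV)"
          using gm by measurable
        show "?thesis \<tau>"
          using sigma_finite_measure.nn_integral_fst[OF sf_count hm2] by simp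
      qed
      have "(\<lambda>\<tau>. \<integral>\<^sup>+z. g (\<tau>, z) \<partial>(lborel \<Otimes>\<^sub>M count_space UNIV)) \<in> borel_measurable lborel"
        using sigma_finite_measure.borel_measurable_nn_integral[OF sf2, of "\<lambda>\<tau> z. g (\<tau>, z)" lborel] gm by simp
      then have "(\<lambda>\<tau>. \<integral>\<^sup>+\<xi>. \<integral>\<^sup>+\<eta>. g (\<tau>, \<xi>, \<eta>) \<partial>count_space UNIV \<partial>lborel) \<in> borel_measurable lborel"
        by (simp only: e)
      then show ?thesis by (simp only: measurable_lborel2)
    qed
    show ?thesis using nn_integral_real_affine[OF m, of 1 "-a"] by simp
  qed
  also have "\<dots> = integral\<^sup>N M3 g" by (rule M3_iter[symmetric]) fact
  finally show ?thesis .
qed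

lemma conv3_eq: "conv3 f g x = (\<integral>y. f y * g (sub3 x y) \<partial>M3)"
  by (cases x) (auto simp: conv3_def sub3_def split: prod.split intro!: Bochner_Integration.integral_cong)

lemma sub3_meas2[measurable]: "(\<lambda>y. sub3 x y) \<in> measurable M3 M3"
  unfolding sub3_def M3_def by measurable

lemma sub3_meas3[measurable]: "sub3 x \<in> measurable M3 M3"
  using sub3_meas2[of x] by (simp add: eta_contract_eq)

lemma L2_nn:
  assumes "in_L2 f"
  shows "(\<integral>\<^sup>+x. ennreal ((cmod (f x))\<^sup>2) \<partial>M3) = ennreal ((L2norm f)\<^sup>2)"
proof -
  have i: "integrable M3 (\<lambda>x. (cmod (f x))\<^sup>2)" using assms unfolding in_L2_def by simp
  have nn: "0 \<le> (\<integral>x. (cmod (f x))\<^sup>2 \<partial>M3)" by (rule integral_nonneg_AE) auto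
  have "(L2norm f)\<^sup>2 = (\<integral>x. (cmod (f x))\<^sup>2 \<partial>M3)" unfolding L2norm_def using nn by simp
  then show ?thesis using nn_integral_eq_integral[OF i] by simp
qed

lemma conv_L2:
  fixes f1 f2 :: "pt \<Rightarrow> complex"
  assumes L1: "in_L2 f1" and L2: "in_L2 f2"
    and S1: "supp3 f1 \<subseteq> E1" and S2: "supp3 f2 \<subseteq> E2" and B: "B \<ge> 0"
    and bnd: "\<And>x. (\<integral>\<^sup>+y. indicator E1 y * indicator E2 (sub3 x y) \<partial>M3) \<le> ennreal B"
    and E1m: "E1 \<in> sets M3" and E2m: "E2 \<in> sets M3"
  shows "in_L2 (conv3 f1 f2) \<and> L2norm (conv3 f1 f2) \<le> sqrt B * L2norm f1 * L2norm f2"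
proof -
  have mf1[measurable]: "f1 \<in> borel_measurable M3" using L1 unfolding in_L2_def by simp
  have mf2[measurable]: "f2 \<in> borel_measurable M3" using L2 unfolding in_L2_def by simp
  have [measurable]: "E1 \<in> sets M3" "E2 \<in> sets M3" using E1m E2m by auto
  have Fm: "(\<lambda>p. f1 (snd p) * f2 (sub3 (fst p) (snd p))) \<in> borel_measurable (M3 \<Otimes>\<^sub>M M3)"
    by measurable
  have cm: "conv3 f1 f2 \<in> borel_measurable M3"
  proof -
    have "(\<lambda>x. \<integral>y. f1 y * f2 (sub3 x y) \<partial>M3) \<in> borel_measurable M3"
      using sigma_finite_measure.borel_measurable_lebesgue_integral[OF sfM3, of "\<lambda>x y. f1 y * f2 (sub3 x y)" M3] Fm
      by (simp add: case_prod_beta)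
    moreover have "conv3 f1 f2 = (\<lambda>x. \<integral>y. f1 y * f2 (sub3 x y) \<partial>M3)"
      by (rule ext) (rule conv3_eq)
    ultimately show ?thesis by simp
  qed
  define G where "G x = (\<integral>\<^sup>+y. ennreal (cmod (f1 y)) * ennreal (cmod (f2 (sub3 x y))) \<partial>M3)" for x
  define H where "H x = (\<integral>\<^sup>+y. ennreal ((cmod (f1 y))\<^sup>2) * ennreal ((cmod (f2 (sub3 x y)))\<^sup>2) \<partial>M3)" for x
  have p1: "ennreal (cmod (conv3 f1 f2 x)) \<le> G x" for x
  proof (cases "integrable M3 (\<lambda>y. f1 y * f2 (sub3 x y))")
    case True
    from integral_norm_bound_ennreal[OF True]
    show ?thesis unfolding conv3_eq G_def by (simp add: norm_mult ennreal_mult)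
  next
    case False
    then show ?thesis unfolding conv3_eq by (simp add: not_integrable_integral_eq)
  qed
  have p2: "(G x)\<^sup>2 \<le> ennreal B * H x" for x
  proof -
    define a where "a y = (indicator E1 y * indicator E2 (sub3 x y) :: ennreal)" for y
    define b where "b y = ennreal (cmod (f1 y)) * ennreal (cmod (f2 (sub3 x y)))" for y
    have am[measurable]: "a \<in> borel_measurable M3" unfolding a_def by measurable
    have bm[measurable]: "b \<in> borel_measurable M3" unfolding b_def by measurable
    have ab: "b y = a y * b y" for y
    proof (cases "f1 y = 0 \<or> f2 (sub3 x y) = 0")
      case True then show ?thesis unfolding b_def by auto
    next
      case False
      then have "y \<in> E1" "sub3 x y \<in> E2" using S1 S2 unfolding supp3_def by auto
      then show ?thesis unfolding a_def by simp
    qed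
    have a2: "(a y)\<^sup>2 = a y" for y unfolding a_def by (auto simp: indicator_def power2_eq_square)
    have b2: "(b y)\<^sup>2 = ennreal ((cmod (f1 y))\<^sup>2) * ennreal ((cmod (f2 (sub3 x y)))\<^sup>2)" for y
      unfolding b_def by (simp add: power_mult_distrib ennreal_power)
    have "(G x)\<^sup>2 = (\<integral>\<^sup>+y. a y * b y \<partial>M3)\<^sup>2"
      unfolding G_def using ab by (simp add: b_def[symmetric])
    also have "\<dots> \<le> (\<integral>\<^sup>+y. (a y)\<^sup>2 \<partial>M3) * (\<integral>\<^sup>+y. (b y)\<^sup>2 \<partial>M3)"
      by (rule Cauchy_Schwarz_nn_integral) auto
    also have "\<dots> = (\<integral>\<^sup>+y. a y \<partial>M3) * H x"
      unfolding a2 b2 H_def by simp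
    also have "\<dots> \<le> ennreal B * H x"
      using bnd[of x] unfolding a_def by (intro mult_right_mono) auto
    finally show ?thesis .
  qed
  have p3: "ennreal ((cmod (conv3 f1 f2 x))\<^sup>2) \<le> ennreal B * H x" for x
  proof -
    have "ennreal ((cmod (conv3 f1 f2 x))\<^sup>2) = (ennreal (cmod (conv3 f1 f2 x)))\<^sup>2"
      by (simp add: ennreal_power)
    also have "\<dots> \<le> (G x)\<^sup>2" using p1[of x] by (intro power_mono) auto
    also have "\<dots> \<le> ennreal B * H x" by (rule p2)
    finally show ?thesis .
  qed
  have hm: "(\<lambda>(x, y). ennreal ((cmod (f1 y))\<^sup>2) * ennreal ((cmod (f2 (sub3 x y)))\<^sup>2)) \<in> borel_measurable (M3 \<Otimes>\<^sub>M M3)"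
    by measurable
  have HI: "(\<integral>\<^sup>+x. H x \<partial>M3) = ennreal ((L2norm f1)\<^sup>2) * ennreal ((L2norm f2)\<^sup>2)"
  proof -
    have "(\<integral>\<^sup>+x. H x \<partial>M3) = (\<integral>\<^sup>+y. \<integral>\<^sup>+x. ennreal ((cmod (f1 y))\<^sup>2) * ennreal ((cmod (f2 (sub3 x y)))\<^sup>2) \<partial>M3 \<partial>M3)"
      unfolding H_def using pair_sigma_finite.Fubini'[OF psfM3 hm] by simp
    also have "\<dots> = (\<integral>\<^sup>+y. ennreal ((cmod (f1 y))\<^sup>2) * ennreal ((L2norm f2)\<^sup>2) \<partial>M3)"
    proof (rule nn_integral_cong)
      fix y
      have "(\<integral>\<^sup>+x. ennreal ((cmod (f1 y))\<^sup>2) * ennreal ((cmod (f2 (sub3 x y)))\<^sup>2) \<partial>M3)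
          = ennreal ((cmod (f1 y))\<^sup>2) * (\<integral>\<^sup>+x. ennreal ((cmod (f2 (sub3 x y)))\<^sup>2) \<partial>M3)"
        by (rule nn_integral_cmult) measurable
      also have "(\<integral>\<^sup>+x. ennreal ((cmod (f2 (sub3 x y)))\<^sup>2) \<partial>M3) = (\<integral>\<^sup>+x. ennreal ((cmod (f2 x))\<^sup>2) \<partial>M3)"
        by (rule trans_inv[of "\<lambda>x. ennreal ((cmod (f2 x))\<^sup>2)"]) measurable
      also have "\<dots> = ennreal ((L2norm f2)\<^sup>2)" by (rule L2_nn[OF L2])
      finally show "(\<integral>\<^sup>+x. ennreal ((cmod (f1 y))\<^sup>2) * ennreal ((cmod (f2 (sub3 x y)))\<^sup>2) \<partial>M3) = ennreal ((cmod (f1 y))\<^sup>2) * ennreal ((L2norm f2)\<^sup>2)" .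
    qed
    also have "\<dots> = (\<integral>\<^sup>+y. ennreal ((cmod (f1 y))\<^sup>2) \<partial>M3) * ennreal ((L2norm f2)\<^sup>2)"
      by (rule nn_integral_multc) measurable
    also have "\<dots> = ennreal ((L2norm f1)\<^sup>2) * ennreal ((L2norm f2)\<^sup>2)" by (simp add: L2_nn[OF L1])
    finally show ?thesis .
  qed
  define R where "R = B * (L2norm f1)\<^sup>2 * (L2norm f2)\<^sup>2"
  have R0: "R \<ge> 0" unfolding R_def using B by simp
  have I: "(\<integral>\<^sup>+x. ennreal ((cmod (conv3 f1 f2 x))\<^sup>2) \<partial>M3) \<le> ennreal R"
  proof -
    have "(\<integral>\<^sup>+x. ennreal ((cmod (conv3 f1 f2 x))\<^sup>2) \<partial>M3) \<le> (\<integral>\<^sup>+x. ennreal B * H x \<partial>M3)"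
      by (rule nn_integral_mono) (rule p3)
    also have "\<dots> = ennreal B * (\<integral>\<^sup>+x. H x \<partial>M3)"
    proof (rule nn_integral_cmult)
      have "(\<lambda>x. \<integral>\<^sup>+y. ennreal ((cmod (f1 y))\<^sup>2) * ennreal ((cmod (f2 (sub3 x y)))\<^sup>2) \<partial>M3) \<in> borel_measurable M3"
        using sigma_finite_measure.borel_measurable_nn_integral[OF sfM3, of "\<lambda>x y. ennreal ((cmod (f1 y))\<^sup>2) * ennreal ((cmod (f2 (sub3 x y)))\<^sup>2)" M3] hm
        by simp
      then show "H \<in> borel_measurable M3" unfolding H_def by simp
    qed
    also have "\<dots> = ennreal R" unfolding HI R_def using B
      by (simp add: ennreal_mult mult.assoc)
    finally show ?thesis .
  qed
  have integ: "integrable M3 (\<lambda>x. (cmod (conv3 f1 f2 x))\<^sup>2)"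
  proof (rule integrableI_bounded)
    show "(\<lambda>x. (cmod (conv3 f1 f2 x))\<^sup>2) \<in> borel_measurable M3" using cm by measurable
    show "(\<integral>\<^sup>+x. ennreal (norm ((cmod (conv3 f1 f2 x))\<^sup>2)) \<partial>M3) < \<infinity>"
      using I by (simp add: le_less_trans)
  qed
  have inL: "in_L2 (conv3 f1 f2)" unfolding in_L2_def using cm integ by simp
  have "ennreal ((L2norm (conv3 f1 f2))\<^sup>2) \<le> ennreal R"
    using I L2_nn[OF inL] by simp
  then have sq: "(L2norm (conv3 f1 f2))\<^sup>2 \<le> R" using R0 by simp
  have "L2norm (conv3 f1 f2) \<le> sqrt R"
    using real_le_rsqrt[OF sq] .
  also have "sqrt R = sqrt B * L2norm f1 * L2norm f2"
    unfolding R_def by (simp add: real_sqrt_mult L2norm_def)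
  finally show ?thesis using inL by simp
qed

lemma int_interval_card:
  fixes u v :: real
  assumes "u \<le> v + 1"
  shows "finite {t::int. u \<le> real_of_int t \<and> real_of_int t \<le> v} \<and>
         real (card {t::int. u \<le> real_of_int t \<and> real_of_int t \<le> v}) \<le> v - u + 1"
proof -
  have eq: "{t::int. u \<le> real_of_int t \<and> real_of_int t \<le> v} = {\<lceil>u\<rceil>..\<lfloor>v\<rfloor>}"
    by (auto simp: ceiling_le_iff le_floor_iff)
  have "real (card {\<lceil>u\<rceil>..\<lfloor>v\<rfloor>}) \<le> v - u + 1"
  proof (cases "\<lceil>u\<rceil> \<le> \<lfloor>v\<rfloor>")
    case True
    then have "real (card {\<lceil>u\<rceil>..\<lfloor>v\<rfloor>}) = real_of_int (\<lfloor>v\<rfloor> - \<lceil>u\<rceil> + 1)" by simp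
    also have "\<dots> \<le> v - u + 1" using of_int_floor_le[of v] le_of_int_ceiling[of u]
      by (simp only: of_int_add of_int_diff of_int_1)
    finally show ?thesis .
  next
    case False then show ?thesis using assms by simp
  qed
  then show ?thesis unfolding eq by simp
qed

lemma sqrt_diff_bound:
  fixes q m :: real
  assumes "m > 0" "q > m"
  shows "sqrt (q + m) - sqrt (q - m) \<le> 2 * m / sqrt q"
proof -
  have qm0: "q - m \<ge> 0" "q + m \<ge> 0" using assms by auto
  have p: "(sqrt (q + m) - sqrt (q - m)) * (sqrt (q + m) + sqrt (q - m)) = 2 * m"
    using qm0 by (simp add: algebra_simps power2_eq_square[symmetric])
  have s1: "sqrt (q + m) \<ge> sqrt q" using assms by simp
  have s2: "sqrt (q - m) \<ge> 0" using qm0 by simp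
  have sq: "sqrt q > 0" using assms by simp
  have d: "sqrt (q + m) - sqrt (q - m) \<ge> 0" using assms qm0 by simp
  have "sqrt q \<le> sqrt (q + m) + sqrt (q - m)" using s1 s2 by linarith
  from mult_left_mono[OF this d]
  have "(sqrt (q + m) - sqrt (q - m)) * sqrt q \<le> (sqrt (q + m) - sqrt (q - m)) * (sqrt (q + m) + sqrt (q - m))" .
  then have "(sqrt (q + m) - sqrt (q - m)) * sqrt q \<le> 2 * m" using p by simp
  then show ?thesis using sq by (simp add: field_simps)
qed

lemma count_quad_pos:
  fixes a t0 c M :: real
  assumes a: "a > 0" and M: "M > 0" and c: "c \<noteq> 0"
  shows "finite {t::int. \<bar>a * (real_of_int t - t0)\<^sup>2 - c\<bar> \<le> M} \<and>
         real (card {t::int. \<bar>a * (real_of_int t - t0)\<^sup>2 - c\<bar> \<le> M}) \<le> 2 + 4 * M / sqrt (a * \<bar>c\<bar>)"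
proof -
  define q where "q = c / a"
  define m where "m = M / a"
  have m0: "m > 0" unfolding m_def using a M by simp
  have q0: "q \<noteq> 0" unfolding q_def using a c by simp
  have cond: "\<bar>a * (x - t0)\<^sup>2 - c\<bar> \<le> M \<longleftrightarrow> \<bar>(x - t0)\<^sup>2 - q\<bar> \<le> m" for x
  proof -
    have "a * (x - t0)\<^sup>2 - c = a * ((x - t0)\<^sup>2 - q)" unfolding q_def using a by (simp add: field_simps)
    then have "\<bar>a * (x - t0)\<^sup>2 - c\<bar> = a * \<bar>(x - t0)\<^sup>2 - q\<bar>" using a by (simp add: abs_mult)
    then show ?thesis unfolding m_def using a by (simp add: field_simps)
  qed
  have rhs: "4 * M / sqrt (a * \<bar>c\<bar>) = 4 * m / sqrt \<bar>q\<bar>"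
  proof -
    have "a * \<bar>c\<bar> = a * a * \<bar>q\<bar>" unfolding q_def using a by (simp add: abs_div)
    then have "sqrt (a * \<bar>c\<bar>) = a * sqrt \<bar>q\<bar>" using a by (simp add: real_sqrt_mult)
    then show ?thesis unfolding m_def using a by (simp add: field_simps)
  qed
  define S where "S = {t::int. \<bar>a * (real_of_int t - t0)\<^sup>2 - c\<bar> \<le> M}"
  have S_eq: "S = {t::int. \<bar>(real_of_int t - t0)\<^sup>2 - q\<bar> \<le> m}" unfolding S_def using cond by simp
  have main: "finite S \<and> real (card S) \<le> 2 + 4 * m / sqrt \<bar>q\<bar>"
  proof (cases "\<bar>q\<bar> \<le> m")
    case True
    define r where "r = sqrt (2 * m)"
    have sub: "S \<subseteq> {t::int. t0 - r \<le> real_of_int t \<and> real_of_int t \<le> t0 + r}"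
    proof
      fix t assume "t \<in> S"
      then have "(real_of_int t - t0)\<^sup>2 \<le> 2 * m" using True unfolding S_eq by auto
      then have "\<bar>real_of_int t - t0\<bar>\<^sup>2 \<le> 2 * m" by simp
      then have "\<bar>real_of_int t - t0\<bar> \<le> r" unfolding r_def by (rule real_le_rsqrt)
      then show "t \<in> {t::int. t0 - r \<le> real_of_int t \<and> real_of_int t \<le> t0 + r}" by auto
    qed
    have r0: "r \<ge> 0" unfolding r_def using m0 by simp
    from int_interval_card[of "t0 - r" "t0 + r"] r0
    have fi: "finite {t::int. t0 - r \<le> real_of_int t \<and> real_of_int t \<le> t0 + r}"
      and ca: "real (card {t::int. t0 - r \<le> real_of_int t \<and> real_of_int t \<le> t0 + r}) \<le> 2 * r + 1" by auto
    have "real (card S) \<le> 2 * r + 1"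
      using card_mono[OF fi sub] ca by linarith
    also have "2 * r \<le> 4 * m / sqrt \<bar>q\<bar>"
    proof -
      have sq: "sqrt \<bar>q\<bar> > 0" using q0 by simp
      have "sqrt \<bar>q\<bar> \<le> sqrt m" using True by simp
      have "2 * r * sqrt \<bar>q\<bar> \<le> 2 * r * sqrt m"
        using \<open>sqrt \<bar>q\<bar> \<le> sqrt m\<close> r0 by (intro mult_left_mono) auto
      also have "2 * r * sqrt m = 2 * sqrt 2 * (sqrt m * sqrt m)" unfolding r_def by (simp add: real_sqrt_mult)
      also have "\<dots> = 2 * sqrt 2 * m" using m0 by simp
      also have "\<dots> \<le> 4 * m" using m0 sqrt2_less_2 by simp
      finally show ?thesis using sq by (simp add: field_simps)
    qed
    finally show ?thesis using finite_subset[OF sub fi] by simp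
  next
    case False
    show ?thesis
    proof (cases "q > 0")
      case qp: True
      then have qm: "q > m" using False by simp
      define lo where "lo = sqrt (q - m)"
      define hi where "hi = sqrt (q + m)"
      have lohi: "lo \<le> hi" unfolding lo_def hi_def using m0 by simp
      have sub: "S \<subseteq> {t::int. t0 + lo \<le> real_of_int t \<and> real_of_int t \<le> t0 + hi}
                     \<union> {t::int. t0 - hi \<le> real_of_int t \<and> real_of_int t \<le> t0 - lo}"
      proof
        fix t assume "t \<in> S"
        then have h: "q - m \<le> (real_of_int t - t0)\<^sup>2" "(real_of_int t - t0)\<^sup>2 \<le> q + m" unfolding S_eq by auto
        have "lo \<le> \<bar>real_of_int t - t0\<bar>" unfolding lo_def using h(1) by (metis real_sqrt_abs real_sqrt_le_mono)
        moreover have "\<bar>real_of_int t - t0\<bar> \<le> hi" unfolding hi_def using h(2) by (metis real_sqrt_abs real_sqrt_le_mono)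
        ultimately show "t \<in> {t::int. t0 + lo \<le> real_of_int t \<and> real_of_int t \<le> t0 + hi}
                     \<union> {t::int. t0 - hi \<le> real_of_int t \<and> real_of_int t \<le> t0 - lo}" by (auto simp: abs_if split: if_splits)
      qed
      from int_interval_card[of "t0 + lo" "t0 + hi"] lohi
      have f1: "finite {t::int. t0 + lo \<le> real_of_int t \<and> real_of_int t \<le> t0 + hi}"
        and c1: "real (card {t::int. t0 + lo \<le> real_of_int t \<and> real_of_int t \<le> t0 + hi}) \<le> hi - lo + 1" by auto
      from int_interval_card[of "t0 - hi" "t0 - lo"] lohi
      have f2: "finite {t::int. t0 - hi \<le> real_of_int t \<and> real_of_int t \<le> t0 - lo}"
        and c2: "real (card {t::int. t0 - hi \<le> real_of_int t \<and> real_of_int t \<le> t0 - lo}) \<le> hi - lo + 1" by auto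
      have fu: "finite ({t::int. t0 + lo \<le> real_of_int t \<and> real_of_int t \<le> t0 + hi}
                     \<union> {t::int. t0 - hi \<le> real_of_int t \<and> real_of_int t \<le> t0 - lo})" using f1 f2 by simp
      have "real (card S) \<le> real (card ({t::int. t0 + lo \<le> real_of_int t \<and> real_of_int t \<le> t0 + hi}
                     \<union> {t::int. t0 - hi \<le> real_of_int t \<and> real_of_int t \<le> t0 - lo}))"
        using card_mono[OF fu sub] by simp
      also have "\<dots> \<le> real (card {t::int. t0 + lo \<le> real_of_int t \<and> real_of_int t \<le> t0 + hi})
                     + real (card {t::int. t0 - hi \<le> real_of_int t \<and> real_of_int t \<le> t0 - lo})"
        using of_nat_mono[OF card_Un_le[of "{t::int. t0 + lo \<le> real_of_int t \<and> real_of_int t \<le> t0 + hi}" "{t::int. t0 - hi \<le> real_of_int t \<and> real_of_int t \<le> t0 - lo}"], where 'a=real]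
        by simp
      also have "\<dots> \<le> 2 * (hi - lo) + 2" using c1 c2 by simp
      also have "hi - lo \<le> 2 * m / sqrt q" unfolding hi_def lo_def by (rule sqrt_diff_bound[OF m0 qm])
      finally show ?thesis using finite_subset[OF sub fu] qp by simp
    next
      case qn: False
      then have "q < - m" using False q0 by simp
      then have "S = {}" unfolding S_eq
        by (auto, smt (verit) zero_le_power2)
      then show ?thesis using m0 by simp
    qed
  qed
  then show ?thesis using rhs unfolding S_def by simp
qed

lemma count_quad:
  fixes a t0 c M :: real
  assumes a: "a \<noteq> 0" and M: "M > 0" and c: "c \<noteq> 0"
  shows "finite {t::int. \<bar>a * (real_of_int t - t0)\<^sup>2 - c\<bar> \<le> M} \<and>
         real (card {t::int. \<bar>a * (real_of_int t - t0)\<^sup>2 - c\<bar> \<le> M}) \<le> 2 + 4 * M / sqrt (\<bar>a\<bar> * \<bar>c\<bar>)"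
proof (cases "a > 0")
  case True then show ?thesis using count_quad_pos[OF True M c] by simp
next
  case False
  then have a': "- a > 0" using a by simp
  have c': "- c \<noteq> 0" using c by simp
  have eq: "{t::int. \<bar>a * (real_of_int t - t0)\<^sup>2 - c\<bar> \<le> M} = {t::int. \<bar>(- a) * (real_of_int t - t0)\<^sup>2 - (- c)\<bar> \<le> M}"
    by (auto simp: abs_minus_commute)
  show ?thesis using count_quad_pos[OF a' M c'] False unfolding eq by simp
qed

definition isq :: "real \<Rightarrow> ennreal" where
  "isq u = (if u = 0 then \<infinity> else ennreal (1 / sqrt \<bar>u\<bar>))"

lemma isq_meas[measurable]: "isq \<in> borel_measurable borel"
  unfolding isq_def by measurable

lemma isq_mono: "\<bar>u\<bar> \<le> \<bar>v\<bar> \<Longrightarrow> isq v \<le> isq u"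
  unfolding isq_def by (auto intro!: ennreal_leI divide_left_mono simp: mult_pos_pos)

lemma isq_scale:
  assumes "\<beta> > 0" shows "isq (\<beta> * u) = ennreal (1 / sqrt \<beta>) * isq u"
proof (cases "u = 0")
  case True then show ?thesis using assms unfolding isq_def by simp
next
  case False
  then have "isq (\<beta> * u) = ennreal (1 / sqrt (\<beta> * \<bar>u\<bar>))" using assms unfolding isq_def by (simp add: abs_mult)
  also have "\<dots> = ennreal (1 / sqrt \<beta>) * ennreal (1 / sqrt \<bar>u\<bar>)"
    using assms by (simp add: ennreal_mult[symmetric] real_sqrt_mult)
  finally show ?thesis using False unfolding isq_def by simp
qed

lemma powr_mhalf: "(0::real) < u \<Longrightarrow> 1 / sqrt \<bar>u\<bar> = u powr (-1/2)"
proof -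
  assume u: "0 < u"
  have e: "(-1/2::real) = - (1/2)" by simp
  have "u powr (-1/2) = inverse (u powr (1/2))" unfolding e by (rule powr_minus)
  also have "u powr (1/2) = sqrt u" using u by (intro powr_half_sqrt) simp
  finally show ?thesis by (simp only: abs_of_pos[OF u] inverse_eq_divide)
qed

lemma powr_half_int: "(w::real) \<ge> 0 \<Longrightarrow> w powr (-1/2 + 1) / (-1/2 + 1) = 2 * sqrt w"
proof -
  assume w: "w \<ge> 0"
  have e: "(-1/2 + 1::real) = 1/2" by simp
  show ?thesis unfolding e powr_half_sqrt[OF w] by simp
qed

lemma isq_half:
  assumes w: "w \<ge> 0"
  shows "(\<integral>\<^sup>+u. indicator {0..w} u * isq u \<partial>lborel) = ennreal (2 * sqrt w)"
proof -
  have "(\<integral>\<^sup>+u. indicator {0..w} u * isq u \<partial>lborel) = (\<integral>\<^sup>+u. indicator {0..w} u * ennreal (u powr (-1/2)) \<partial>lborel)"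
  proof (intro nn_integral_cong_AE eventually_mono[OF AE_lborel_singleton[of 0]])
    fix u :: real assume u: "u \<noteq> 0"
    show "indicator {0..w} u * isq u = indicator {0..w} u * ennreal (u powr (-1/2))"
    proof (cases "u \<in> {0..w}")
      case True
      then have pos: "0 < u" using u by auto
      have "isq u = ennreal (1 / sqrt \<bar>u\<bar>)" using u unfolding isq_def by simp
      also have "\<dots> = ennreal (u powr (-1/2))" by (simp only: powr_mhalf[OF pos])
      finally show ?thesis by (simp only:)
    qed simp
  qed
  also have "\<dots> = ennreal (w powr (-1/2 + 1) / (-1/2 + 1))"
  proof -
    have hi: "((\<lambda>x. x powr (-1/2)) has_integral (w powr (-1/2+1)/(-1/2+1))) {0..w}"
      by (rule has_integral_powr_from_0) (use w in auto)
    have "\<And>x. x \<in> {0..w} \<Longrightarrow> 0 \<le> x powr (-1/2)" by simp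
    note nn_integral_has_integral_lebesgue[OF this hi]
    moreover have "(\<integral>\<^sup>+u. indicator {0..w} u * ennreal (u powr (-1/2)) \<partial>lborel)
       = (\<integral>\<^sup>+x. ennreal (indicator {0..w} x * x powr (-1/2)) \<partial>lborel)"
      by (intro nn_integral_cong) (simp add: indicator_def)
    ultimately show ?thesis by simp
  qed
  also have "w powr (-1/2 + 1) / (-1/2 + 1) = 2 * sqrt w"
    using w by (rule powr_half_int)
  finally show ?thesis .
qed

lemma isq_full:
  assumes w: "w \<ge> 0"
  shows "(\<integral>\<^sup>+s. indicator {z - w..z + w} s * isq (s - z) \<partial>lborel) \<le> ennreal (4 * sqrt w)"
proof -
  have "(\<integral>\<^sup>+s. indicator {z - w..z + w} s * isq (s - z) \<partial>lborel)
      \<le> (\<integral>\<^sup>+s. indicator {z..z + w} s * isq (s - z) + indicator {z - w..z} s * isq (s - z) \<partial>lborel)"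
    by (intro nn_integral_mono) (auto simp: indicator_def)
  also have "\<dots> = (\<integral>\<^sup>+s. indicator {z..z + w} s * isq (s - z) \<partial>lborel) + (\<integral>\<^sup>+s. indicator {z - w..z} s * isq (s - z) \<partial>lborel)"
    by (rule nn_integral_add) auto
  also have "(\<integral>\<^sup>+s. indicator {z..z + w} s * isq (s - z) \<partial>lborel) = ennreal (2 * sqrt w)"
  proof -
    have "(\<integral>\<^sup>+s. indicator {z..z + w} s * isq (s - z) \<partial>lborel) = (\<integral>\<^sup>+u. indicator {z..z + w} (z + 1 * u) * isq (z + 1 * u - z) \<partial>lborel)"
      using nn_integral_real_affine[where f="\<lambda>s. indicator {z..z + w} s * isq (s - z)" and c=1 and t=z] by simp
    also have "\<dots> = (\<integral>\<^sup>+u. indicator {0..w} u * isq u \<partial>lborel)"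
      by (intro nn_integral_cong) (auto simp: indicator_def)
    finally show ?thesis using isq_half[OF w] by simp
  qed
  also have "(\<integral>\<^sup>+s. indicator {z - w..z} s * isq (s - z) \<partial>lborel) = ennreal (2 * sqrt w)"
  proof -
    have "(\<integral>\<^sup>+s. indicator {z - w..z} s * isq (s - z) \<partial>lborel) = (\<integral>\<^sup>+u. indicator {z - w..z} (z + (-1) * u) * isq (z + (-1) * u - z) \<partial>lborel)"
      using nn_integral_real_affine[where f="\<lambda>s. indicator {z - w..z} s * isq (s - z)" and c="-1" and t=z] by simp
    also have "\<dots> = (\<integral>\<^sup>+u. indicator {0..w} u * isq u \<partial>lborel)"
      by (intro nn_integral_cong) (auto simp: indicator_def isq_def)
    finally show ?thesis using isq_half[OF w] by simp
  qed
  also have "ennreal (2 * sqrt w) + ennreal (2 * sqrt w) = ennreal (4 * sqrt w)"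
    using w by (simp add: ennreal_plus[symmetric] del: ennreal_plus)
  finally show ?thesis .
qed

lemma sing_root:
  fixes c :: "real \<Rightarrow> real"
  assumes lh: "lo \<le> hi" and b: "\<beta> > 0"
    and cont: "\<And>s. lo \<le> s \<Longrightarrow> s \<le> hi \<Longrightarrow> isCont c s"
    and mono: "\<And>s s'. lo \<le> s' \<Longrightarrow> s' \<le> s \<Longrightarrow> s \<le> hi \<Longrightarrow> \<beta> * (s - s') \<le> c s' - c s"
  shows "\<exists>z. lo \<le> z \<and> z \<le> hi \<and> (\<forall>s. lo \<le> s \<and> s \<le> hi \<longrightarrow> \<beta> * \<bar>s - z\<bar> \<le> \<bar>c s\<bar>)"
proof (cases "c hi \<ge> 0")
  case True
  show ?thesis
  proof (intro exI[of _ hi] conjI allI impI)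
    fix s assume s: "lo \<le> s \<and> s \<le> hi"
    have "\<beta> * (hi - s) \<le> c s - c hi" using mono[of s hi] s by simp
    moreover have "\<beta> * (hi - s) \<ge> 0" using s b by simp
    moreover have "\<bar>s - hi\<bar> = hi - s" using s by simp
    ultimately show "\<beta> * \<bar>s - hi\<bar> \<le> \<bar>c s\<bar>" using True by simp
  qed (use lh in auto)
next
  case F1: False
  show ?thesis
  proof (cases "c lo \<le> 0")
    case True
    show ?thesis
    proof (intro exI[of _ lo] conjI allI impI)
      fix s assume s: "lo \<le> s \<and> s \<le> hi"
      have "\<beta> * (s - lo) \<le> c lo - c s" using mono[of lo s] s by simp
      moreover have "\<beta> * (s - lo) \<ge> 0" using s b by simp
      moreover have "\<bar>s - lo\<bar> = s - lo" using s by simp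
      ultimately show "\<beta> * \<bar>s - lo\<bar> \<le> \<bar>c s\<bar>" using True by simp
    qed (use lh in auto)
  next
    case False
    obtain z where z: "lo \<le> z" "z \<le> hi" "c z = 0"
      using IVT2[of c hi 0 lo] F1 False lh cont by auto
    show ?thesis
    proof (intro exI[of _ z] conjI allI impI)
      fix s assume s: "lo \<le> s \<and> s \<le> hi"
      show "\<beta> * \<bar>s - z\<bar> \<le> \<bar>c s\<bar>"
      proof (cases "s \<ge> z")
        case True
        then have "\<beta> * (s - z) \<le> c z - c s" using mono[of z s] s z by simp
        then show ?thesis using True z by simp
      next
        case False
        then have "\<beta> * (z - s) \<le> c s - c z" using mono[of s z] s z by simp
        then show ?thesis using False z by simp
      qed
    qed (use z in auto)
  qed
qed

lemma sing_int:
  fixes c :: "real \<Rightarrow> real"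
  assumes lh: "lo \<le> hi" and b: "\<beta> > 0"
    and cont: "\<And>s. lo \<le> s \<Longrightarrow> s \<le> hi \<Longrightarrow> isCont c s"
    and mono: "\<And>s s'. lo \<le> s' \<Longrightarrow> s' \<le> s \<Longrightarrow> s \<le> hi \<Longrightarrow> \<beta> * (s - s') \<le> c s' - c s"
  shows "(\<integral>\<^sup>+s. indicator {lo..hi} s * isq (c s) \<partial>lborel) \<le> ennreal (4 * sqrt ((hi - lo) / \<beta>))"
proof -
  obtain z where z: "lo \<le> z" "z \<le> hi" and zb: "\<And>s. lo \<le> s \<Longrightarrow> s \<le> hi \<Longrightarrow> \<beta> * \<bar>s - z\<bar> \<le> \<bar>c s\<bar>"
    using sing_root[OF lh b cont mono] by blast
  define w where "w = hi - lo"
  have w: "w \<ge> 0" unfolding w_def using lh by simp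
  have "(\<integral>\<^sup>+s. indicator {lo..hi} s * isq (c s) \<partial>lborel) \<le> (\<integral>\<^sup>+s. ennreal (1 / sqrt \<beta>) * (indicator {z - w..z + w} s * isq (s - z)) \<partial>lborel)"
  proof (intro nn_integral_mono)
    fix s
    show "indicator {lo..hi} s * isq (c s) \<le> ennreal (1 / sqrt \<beta>) * (indicator {z - w..z + w} s * isq (s - z))"
    proof (cases "lo \<le> s \<and> s \<le> hi")
      case True
      have "\<bar>\<beta> * (s - z)\<bar> \<le> \<bar>c s\<bar>" using zb[of s] True b by (simp add: abs_mult)
      then have "isq (c s) \<le> isq (\<beta> * (s - z))" by (rule isq_mono)
      also have "\<dots> = ennreal (1 / sqrt \<beta>) * isq (s - z)" by (rule isq_scale[OF b])
      finally show ?thesis using True z unfolding w_def by (simp add: indicator_def)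
    next
      case False then show ?thesis by simp
    qed
  qed
  also have "\<dots> = ennreal (1 / sqrt \<beta>) * (\<integral>\<^sup>+s. indicator {z - w..z + w} s * isq (s - z) \<partial>lborel)"
    by (rule nn_integral_cmult) auto
  also have "\<dots> \<le> ennreal (1 / sqrt \<beta>) * ennreal (4 * sqrt w)"
    by (intro mult_left_mono isq_full w) auto
  also have "\<dots> = ennreal (4 * sqrt (w / \<beta>))"
    using b w by (simp add: ennreal_mult[symmetric] real_sqrt_divide)
  finally show ?thesis unfolding w_def .
qed

definition gp :: "real \<Rightarrow> real \<Rightarrow> real" where
  "gp \<alpha> s = s * \<bar>s\<bar> powr \<alpha>"

lemma gp_deriv:
  assumes s: "s \<noteq> 0"
  shows "(gp \<alpha> has_real_derivative (\<alpha> + 1) * \<bar>s\<bar> powr \<alpha>) (at s)"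
proof (cases "s > 0")
  case True
  have ev: "eventually (\<lambda>y. y \<in> {0<..}) (nhds s)"
    by (rule eventually_nhds_in_open) (use True in auto)
  have ev2: "eventually (\<lambda>y. gp \<alpha> y = y powr (\<alpha> + 1)) (nhds s)"
  proof (rule eventually_mono[OF ev])
    fix y :: real assume "y \<in> {0<..}"
    then have y: "y > 0" by simp
    then show "gp \<alpha> y = y powr (\<alpha> + 1)" unfolding gp_def
      by (simp add: powr_add)
  qed
  have d: "((\<lambda>y. y powr (\<alpha> + 1)) has_real_derivative (\<alpha> + 1) * s powr (\<alpha> + 1 - 1)) (at s)"
    by (rule has_real_derivative_powr) (use True in simp)
  have e: "(\<alpha> + 1) * s powr (\<alpha> + 1 - 1) = (\<alpha> + 1) * \<bar>s\<bar> powr \<alpha>" using True by simp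
  have "(gp \<alpha> has_real_derivative (\<alpha> + 1) * s powr (\<alpha> + 1 - 1)) (at s)"
    by (subst DERIV_cong_ev[OF refl ev2 refl]) (rule d)
  then show ?thesis by (simp only: e)
next
  case False
  then have neg: "s < 0" using s by simp
  have ev: "eventually (\<lambda>y. y \<in> {..<0}) (nhds s)"
    by (rule eventually_nhds_in_open) (use neg in auto)
  have ev2: "eventually (\<lambda>y. gp \<alpha> y = - ((- y) powr (\<alpha> + 1))) (nhds s)"
  proof (rule eventually_mono[OF ev])
    fix y :: real assume "y \<in> {..<0}"
    then have y: "y < 0" by simp
    have "(- y) powr (\<alpha> + 1) = (- y) powr \<alpha> * (- y)" using y by (simp add: powr_add)
    then show "gp \<alpha> y = - ((- y) powr (\<alpha> + 1))" unfolding gp_def using y by simp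
  qed
  have d0: "((\<lambda>y. y powr (\<alpha> + 1)) has_real_derivative (\<alpha> + 1) * (- s) powr (\<alpha> + 1 - 1)) (at (- s))"
    by (rule has_real_derivative_powr) (use neg in simp)
  have d1: "((\<lambda>y. (- y) powr (\<alpha> + 1)) has_real_derivative (\<alpha> + 1) * (- s) powr (\<alpha> + 1 - 1) * (- 1)) (at s)"
  proof -
    have d2: "(uminus has_real_derivative -1) (at s)" by (auto intro!: derivative_eq_intros)
    from DERIV_chain2[where f="\<lambda>y. y powr (\<alpha> + 1)" and g=uminus, OF d0 d2]
    show ?thesis by simp
  qed
  have d: "((\<lambda>y. - ((- y) powr (\<alpha> + 1))) has_real_derivative - ((\<alpha> + 1) * (- s) powr (\<alpha> + 1 - 1) * (- 1))) (at s)"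
    by (rule DERIV_minus[OF d1])
  have e: "- ((\<alpha> + 1) * (- s) powr (\<alpha> + 1 - 1) * (- 1)) = (\<alpha> + 1) * \<bar>s\<bar> powr \<alpha>" using neg by simp
  have "(gp \<alpha> has_real_derivative - ((\<alpha> + 1) * (- s) powr (\<alpha> + 1 - 1) * (- 1))) (at s)"
    by (subst DERIV_cong_ev[OF refl ev2 refl]) (rule d)
  then show ?thesis by (simp only: e)
qed

definition Gf :: "real \<Rightarrow> real \<Rightarrow> real \<Rightarrow> real" where
  "Gf \<alpha> \<xi> s = gp \<alpha> s + gp \<alpha> (\<xi> - s)"

lemma Gf_deriv:
  assumes "s \<noteq> 0" "\<xi> - s \<noteq> 0"
  shows "(Gf \<alpha> \<xi> has_real_derivative (\<alpha> + 1) * \<bar>s\<bar> powr \<alpha> - (\<alpha> + 1) * \<bar>\<xi> - s\<bar> powr \<alpha>) (at s)"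
proof -
  have d1: "(gp \<alpha> has_real_derivative (\<alpha> + 1) * \<bar>s\<bar> powr \<alpha>) (at s)"
    by (rule gp_deriv) fact
  have d2: "((\<lambda>s. \<xi> - s) has_real_derivative -1) (at s)"
    by (auto intro!: derivative_eq_intros)
  have d3: "((\<lambda>s. gp \<alpha> (\<xi> - s)) has_real_derivative (\<alpha> + 1) * \<bar>\<xi> - s\<bar> powr \<alpha> * (-1)) (at s)"
    using DERIV_chain2[OF gp_deriv[OF assms(2)] d2] by simp
  show ?thesis unfolding Gf_def[abs_def] using DERIV_add[OF d1 d3] by simp
qed

lemma Gf_mono:
  assumes a: "\<alpha> \<ge> 2" and N1: "N1 > 0"
    and piece: "\<And>\<theta>. lo \<le> \<theta> \<Longrightarrow> \<theta> \<le> hi \<Longrightarrow> \<theta> \<noteq> 0 \<and> \<xi> - \<theta> \<noteq> 0 \<and> 2 * \<bar>\<xi> - \<theta>\<bar> \<le> \<bar>\<theta>\<bar> \<and> N1 / 4 \<le> \<bar>\<theta>\<bar>"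
    and s: "lo \<le> s'" "s' \<le> s" "s \<le> hi"
  shows "(N1 / 4) powr \<alpha> * (s - s') \<le> Gf \<alpha> \<xi> s - Gf \<alpha> \<xi> s'"
proof (cases "s' = s")
  case True then show ?thesis by simp
next
  case False
  then have lt: "s' < s" using s by simp
  define G' where "G' \<theta> = (\<alpha> + 1) * \<bar>\<theta>\<bar> powr \<alpha> - (\<alpha> + 1) * \<bar>\<xi> - \<theta>\<bar> powr \<alpha>" for \<theta>
  have der: "\<And>x. s' \<le> x \<Longrightarrow> x \<le> s \<Longrightarrow> (Gf \<alpha> \<xi> has_real_derivative G' x) (at x)"
  proof -
    fix x assume x: "s' \<le> x" "x \<le> s"
    then have "lo \<le> x" "x \<le> hi" using s by auto
    from piece[OF this] show "(Gf \<alpha> \<xi> has_real_derivative G' x) (at x)"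
      unfolding G'_def by (intro Gf_deriv) auto
  qed
  obtain \<theta> where th: "s' < \<theta>" "\<theta> < s" and eq: "Gf \<alpha> \<xi> s - Gf \<alpha> \<xi> s' = (s - s') * G' \<theta>"
    using MVT2[OF lt der] by blast
  have pt: "\<theta> \<noteq> 0" "2 * \<bar>\<xi> - \<theta>\<bar> \<le> \<bar>\<theta>\<bar>" "N1 / 4 \<le> \<bar>\<theta>\<bar>" using piece[of \<theta>] th s by auto
  have "(N1 / 4) powr \<alpha> \<le> \<bar>\<theta>\<bar> powr \<alpha>"
    using pt N1 a by (intro powr_mono2) auto
  have two: "(4::real) \<le> 2 powr \<alpha>"
  proof -
    have "(2::real) powr 2 \<le> 2 powr \<alpha>" using a by (intro powr_mono) auto
    then show ?thesis by simp
  qed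
  have "\<bar>\<xi> - \<theta>\<bar> powr \<alpha> \<le> (\<bar>\<theta>\<bar> / 2) powr \<alpha>"
    using pt a by (intro powr_mono2) auto
  also have "\<dots> = \<bar>\<theta>\<bar> powr \<alpha> / 2 powr \<alpha>" by (rule powr_divide)
  also have "\<dots> \<le> \<bar>\<theta>\<bar> powr \<alpha> / 4"
    using two by (intro divide_left_mono) auto
  finally have small: "\<bar>\<xi> - \<theta>\<bar> powr \<alpha> \<le> \<bar>\<theta>\<bar> powr \<alpha> / 4" .
  have "G' \<theta> \<ge> \<bar>\<theta>\<bar> powr \<alpha>"
  proof -
    have "G' \<theta> = (\<alpha> + 1) * (\<bar>\<theta>\<bar> powr \<alpha> - \<bar>\<xi> - \<theta>\<bar> powr \<alpha>)" unfolding G'_def by (simp add: algebra_simps)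
    also have "\<dots> \<ge> (\<alpha> + 1) * (3 / 4 * \<bar>\<theta>\<bar> powr \<alpha>)"
      using small a by (intro mult_left_mono) auto
    finally have "G' \<theta> \<ge> (\<alpha> + 1) * (3 / 4 * \<bar>\<theta>\<bar> powr \<alpha>)" .
    moreover have "(\<alpha> + 1) * (3 / 4 * \<bar>\<theta>\<bar> powr \<alpha>) \<ge> 1 * \<bar>\<theta>\<bar> powr \<alpha>"
    proof -
      have "(\<alpha> + 1) * (3 / 4) \<ge> 1" using a by simp
      then have "((\<alpha> + 1) * (3 / 4)) * \<bar>\<theta>\<bar> powr \<alpha> \<ge> 1 * \<bar>\<theta>\<bar> powr \<alpha>"
        by (intro mult_right_mono) auto
      then show ?thesis by (simp only: mult.assoc)
    qed
    ultimately show ?thesis by simp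
  qed
  then have "G' \<theta> \<ge> (N1 / 4) powr \<alpha>" using \<open>(N1 / 4) powr \<alpha> \<le> \<bar>\<theta>\<bar> powr \<alpha>\<close> by linarith
  then have "(s - s') * (N1 / 4) powr \<alpha> \<le> (s - s') * G' \<theta>" using lt by (intro mult_left_mono) auto
  then show ?thesis using eq by (simp add: mult.commute)
qed

lemma Gf_cont:
  assumes "s \<noteq> 0" "\<xi> - s \<noteq> 0"
  shows "isCont (Gf \<alpha> \<xi>) s"
  using Gf_deriv[OF assms] by (rule DERIV_isCont)

lemma D_meas[measurable]: "D_set \<alpha> N L \<in> sets M3"
proof -
  have "D_set \<alpha> N L = {x \<in> space M3. N / 4 \<le> \<bar>fst (snd x)\<bar> \<and> \<bar>fst (snd x)\<bar> \<le> 4 * N \<and>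
      \<bar>fst x - (fst (snd x) * \<bar>fst (snd x)\<bar> powr \<alpha> + (real_of_int (snd (snd x)))\<^sup>2 / fst (snd x))\<bar> \<le> L}"
    unfolding D_set_def A_set_def omega_def M3_def by (auto simp: space_pair_measure)
  also have "\<dots> \<in> sets M3" unfolding M3_def by measurable
  finally show ?thesis .
qed

lemma psf_lb2: "pair_sigma_finite (lborel::real measure) ((lborel::real measure) \<Otimes>\<^sub>M count_space (UNIV::int set))"
  by (intro pair_sigma_finite.intro sf_lb sf2)

lemma M3_iter2:
  assumes h[measurable]: "h \<in> borel_measurable M3"
  shows "integral\<^sup>N M3 h = (\<integral>\<^sup>+\<xi>. \<integral>\<^sup>+\<eta>. \<integral>\<^sup>+\<tau>. h (\<tau>, \<xi>, \<eta>) \<partial>lborel \<partial>count_space UNIV \<partial>lborel)"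
proof -
  have hm: "h \<in> borel_measurable (lborel \<Otimes>\<^sub>M (lborel \<Otimes>\<^sub>M count_space UNIV))"
    using h unfolding M3_def .
  have "integral\<^sup>N M3 h = (\<integral>\<^sup>+z. \<integral>\<^sup>+\<tau>. h (\<tau>, z) \<partial>lborel \<partial>(lborel \<Otimes>\<^sub>M count_space UNIV))"
    unfolding M3_def using pair_sigma_finite.nn_integral_snd[OF psf_lb2 hm] by simp
  also have "\<dots> = (\<integral>\<^sup>+\<xi>. \<integral>\<^sup>+\<eta>. \<integral>\<^sup>+\<tau>. h (\<tau>, \<xi>, \<eta>) \<partial>lborel \<partial>count_space UNIV \<partial>lborel)"
  proof -
    have m1: "(\<lambda>(z, \<tau>). h (\<tau>, z)) \<in> borel_measurable ((lborel \<Otimes>\<^sub>M count_space UNIV) \<Otimes>\<^sub>M lborel)"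
      using hm by measurable
    have m: "(\<lambda>z. \<integral>\<^sup>+\<tau>. h (\<tau>, z) \<partial>lborel) \<in> borel_measurable (lborel \<Otimes>\<^sub>M count_space UNIV)"
      using sigma_finite_measure.borel_measurable_nn_integral[OF sf_lb, of "\<lambda>z \<tau>. h (\<tau>, z)"] m1 by simp
    show ?thesis
      using sigma_finite_measure.nn_integral_fst[OF sf_count m] by simp
  qed
  finally show ?thesis .
qed

lemma tau_bound:
  fixes \<xi>1 :: real and \<eta>1 :: int
  assumes L: "L1 \<ge> 0" "L2 \<ge> 0"
  shows "(\<integral>\<^sup>+\<tau>1. indicator (D_set \<alpha> N1 L1) (\<tau>1, \<xi>1, \<eta>1) * indicator (D_set \<alpha> N2 L2) (\<tau> - \<tau>1, \<xi> - \<xi>1, \<eta> - \<eta>1) \<partial>lborel)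
     \<le> (if \<xi>1 \<in> A_set N1 \<and> \<xi> - \<xi>1 \<in> A_set N2 \<and> \<bar>\<tau> - omega \<alpha> \<xi>1 \<eta>1 - omega \<alpha> (\<xi> - \<xi>1) (\<eta> - \<eta>1)\<bar> \<le> L1 + L2
         then ennreal (2 * min L1 L2) else 0)"
proof -
  define w1 where "w1 = omega \<alpha> \<xi>1 \<eta>1"
  define w2 where "w2 = omega \<alpha> (\<xi> - \<xi>1) (\<eta> - \<eta>1)"
  have ind: "indicator (D_set \<alpha> N1 L1) (\<tau>1, \<xi>1, \<eta>1) * indicator (D_set \<alpha> N2 L2) (\<tau> - \<tau>1, \<xi> - \<xi>1, \<eta> - \<eta>1)
     = (if \<xi>1 \<in> A_set N1 \<and> \<xi> - \<xi>1 \<in> A_set N2 \<and> \<bar>\<tau>1 - w1\<bar> \<le> L1 \<and> \<bar>\<tau> - \<tau>1 - w2\<bar> \<le> L2 then 1 else (0::ennreal))" for \<tau>1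
    unfolding D_set_def w1_def w2_def by (auto simp: indicator_def)
  show ?thesis
  proof (cases "\<xi>1 \<in> A_set N1 \<and> \<xi> - \<xi>1 \<in> A_set N2 \<and> \<bar>\<tau> - w1 - w2\<bar> \<le> L1 + L2")
    case False
    have "(if \<xi>1 \<in> A_set N1 \<and> \<xi> - \<xi>1 \<in> A_set N2 \<and> \<bar>\<tau>1 - w1\<bar> \<le> L1 \<and> \<bar>\<tau> - \<tau>1 - w2\<bar> \<le> L2 then 1 else (0::ennreal)) = 0" for \<tau>1
      using False by auto
    then show ?thesis unfolding ind by simp
  next
    case True
    have b1: "(\<integral>\<^sup>+\<tau>1. (if \<xi>1 \<in> A_set N1 \<and> \<xi> - \<xi>1 \<in> A_set N2 \<and> \<bar>\<tau>1 - w1\<bar> \<le> L1 \<and> \<bar>\<tau> - \<tau>1 - w2\<bar> \<le> L2 then 1 else (0::ennreal)) \<partial>lborel)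
        \<le> ennreal (2 * L1)"
    proof -
      have "(\<integral>\<^sup>+\<tau>1. (if \<xi>1 \<in> A_set N1 \<and> \<xi> - \<xi>1 \<in> A_set N2 \<and> \<bar>\<tau>1 - w1\<bar> \<le> L1 \<and> \<bar>\<tau> - \<tau>1 - w2\<bar> \<le> L2 then 1 else (0::ennreal)) \<partial>lborel)
        \<le> (\<integral>\<^sup>+\<tau>1. indicator {w1 - L1..w1 + L1} \<tau>1 \<partial>lborel)"
        by (intro nn_integral_mono) (auto simp: indicator_def)
      also have "\<dots> = ennreal (2 * L1)" using L by simp
      finally show ?thesis .
    qed
    have b2: "(\<integral>\<^sup>+\<tau>1. (if \<xi>1 \<in> A_set N1 \<and> \<xi> - \<xi>1 \<in> A_set N2 \<and> \<bar>\<tau>1 - w1\<bar> \<le> L1 \<and> \<bar>\<tau> - \<tau>1 - w2\<bar> \<le> L2 then 1 else (0::ennreal)) \<partial>lborel)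
        \<le> ennreal (2 * L2)"
    proof -
      have "(\<integral>\<^sup>+\<tau>1. (if \<xi>1 \<in> A_set N1 \<and> \<xi> - \<xi>1 \<in> A_set N2 \<and> \<bar>\<tau>1 - w1\<bar> \<le> L1 \<and> \<bar>\<tau> - \<tau>1 - w2\<bar> \<le> L2 then 1 else (0::ennreal)) \<partial>lborel)
        \<le> (\<integral>\<^sup>+\<tau>1. indicator {\<tau> - w2 - L2..\<tau> - w2 + L2} \<tau>1 \<partial>lborel)"
        by (intro nn_integral_mono) (auto simp: indicator_def)
      also have "\<dots> = ennreal (2 * L2)" using L by simp
      finally show ?thesis .
    qed
    have "min L1 L2 = L1 \<or> min L1 L2 = L2" by (simp add: min_def)
    then show ?thesis unfolding ind using True b1 b2 unfolding w1_def w2_def by auto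
  qed
qed

lemma quad_id:
  fixes x1 x2 t e :: real
  assumes "x1 \<noteq> 0" "x2 \<noteq> 0" "x1 + x2 \<noteq> 0"
  shows "t\<^sup>2 / x1 + (e - t)\<^sup>2 / x2 = (1 / x1 + 1 / x2) * (t - e * x1 / (x1 + x2))\<^sup>2 + e\<^sup>2 / (x1 + x2)"
proof -
  define s where "s = x1 + x2"
  have s0: "s \<noteq> 0" using assms unfolding s_def by simp
  have h1: "1 / x1 + 1 / x2 = s / (x1 * x2)" unfolding s_def using assms by (simp add: field_simps)
  have h2: "t - e * x1 / s = (t * s - e * x1) / s" using s0 by (simp add: field_simps)
  have R: "(1 / x1 + 1 / x2) * (t - e * x1 / s)\<^sup>2 + e\<^sup>2 / s = ((t * s - e * x1)\<^sup>2 + e\<^sup>2 * x1 * x2) / (x1 * x2 * s)"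
    unfolding h1 h2 using assms s0 by (simp add: power_divide field_simps power2_eq_square)
  have L: "t\<^sup>2 / x1 + (e - t)\<^sup>2 / x2 = (s * (t\<^sup>2 * x2 + (e - t)\<^sup>2 * x1)) / (x1 * x2 * s)"
    using assms s0 by (simp add: field_simps power2_eq_square)
  have N: "s * (t\<^sup>2 * x2 + (e - t)\<^sup>2 * x1) = (t * s - e * x1)\<^sup>2 + e\<^sup>2 * x1 * x2"
    unfolding s_def by (simp add: power2_eq_square algebra_simps)
  show ?thesis using L R N unfolding s_def by simp
qed

lemma a_bound:
  fixes x1 x2 N1 N2 :: real
  assumes N2: "N2 > 0" and x2: "x2 \<noteq> 0" "\<bar>x2\<bar> \<le> 4 * N2" and x1: "2 * \<bar>x2\<bar> \<le> \<bar>x1\<bar>"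
  shows "1 / (8 * N2) \<le> \<bar>1 / x1 + 1 / x2\<bar>" and "1 / x1 + 1 / x2 \<noteq> 0" and "x1 + x2 \<noteq> 0" and "x1 \<noteq> 0"
proof -
  have p2: "\<bar>x2\<bar> > 0" using x2 by simp
  have p1: "\<bar>x1\<bar> > 0" using x1 p2 by linarith
  then show x10: "x1 \<noteq> 0" by simp
  have s: "\<bar>x1 + x2\<bar> \<ge> \<bar>x1\<bar> / 2" using x1 abs_triangle_ineq2[of x1 "- x2"] by simp
  then show "x1 + x2 \<noteq> 0" using p1 by auto
  have e1: "1 / x1 + 1 / x2 = (x1 + x2) / (x1 * x2)" using x10 x2 by (simp add: field_simps)
  have eq: "\<bar>1 / x1 + 1 / x2\<bar> = \<bar>x1 + x2\<bar> / (\<bar>x1\<bar> * \<bar>x2\<bar>)"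
    unfolding e1 by (simp add: abs_mult)
  have "1 / (8 * N2) \<le> 1 / (2 * \<bar>x2\<bar>)"
    using p2 x2 by (intro divide_left_mono) auto
  also have "1 / (2 * \<bar>x2\<bar>) = (\<bar>x1\<bar> / 2) / (\<bar>x1\<bar> * \<bar>x2\<bar>)" using p1 p2 by simp
  also have "\<dots> \<le> \<bar>x1 + x2\<bar> / (\<bar>x1\<bar> * \<bar>x2\<bar>)"
    using s p1 p2 by (intro divide_right_mono) auto
  finally show ab: "1 / (8 * N2) \<le> \<bar>1 / x1 + 1 / x2\<bar>" using eq by simp
  have "1 / (8 * N2) > 0" using N2 by simp
  then show "1 / x1 + 1 / x2 \<noteq> 0" using ab by auto
qed

definition cf :: "real \<Rightarrow> real \<Rightarrow> real \<Rightarrow> int \<Rightarrow> real \<Rightarrow> real" where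
  "cf \<alpha> \<tau> \<xi> \<eta> s = \<tau> - (real_of_int \<eta>)\<^sup>2 / \<xi> - Gf \<alpha> \<xi> s"

lemma eta_bound:
  fixes \<xi>1 :: real
  assumes N1: "N1 > 0" and N2: "N2 > 0" and N12: "32 * N2 \<le> N1" and M: "M > 0"
  shows "(\<integral>\<^sup>+\<eta>1. (if \<xi>1 \<in> A_set N1 \<and> \<xi> - \<xi>1 \<in> A_set N2 \<and> \<bar>\<tau> - omega \<alpha> \<xi>1 \<eta>1 - omega \<alpha> (\<xi> - \<xi>1) (\<eta> - \<eta>1)\<bar> \<le> M
            then 1 else (0::ennreal)) \<partial>count_space UNIV)
     \<le> indicator {s. s \<in> A_set N1 \<and> \<xi> - s \<in> A_set N2} \<xi>1 * (2 + ennreal (4 * M * sqrt (8 * N2)) * isq (cf \<alpha> \<tau> \<xi> \<eta> \<xi>1))"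
proof (cases "\<xi>1 \<in> A_set N1 \<and> \<xi> - \<xi>1 \<in> A_set N2")
  case False
  have "(if \<xi>1 \<in> A_set N1 \<and> \<xi> - \<xi>1 \<in> A_set N2 \<and> \<bar>\<tau> - omega \<alpha> \<xi>1 \<eta>1 - omega \<alpha> (\<xi> - \<xi>1) (\<eta> - \<eta>1)\<bar> \<le> M
            then 1 else (0::ennreal)) = 0" for \<eta>1
    using False by auto
  then show ?thesis by simp
next
  case True
  define x2 where "x2 = \<xi> - \<xi>1"
  have x2b: "x2 \<noteq> 0" "\<bar>x2\<bar> \<le> 4 * N2" using True N2 unfolding x2_def A_set_def by auto
  have x1b: "2 * \<bar>x2\<bar> \<le> \<bar>\<xi>1\<bar>" using True N12 x2b unfolding A_set_def by auto
  note ab = a_bound[OF N2 x2b x1b]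
  have xi: "\<xi> = \<xi>1 + x2" unfolding x2_def by simp
  define a where "a = 1 / \<xi>1 + 1 / x2"
  define t0 where "t0 = real_of_int \<eta> * \<xi>1 / \<xi>"
  define c where "c = cf \<alpha> \<tau> \<xi> \<eta> \<xi>1"
  have key: "\<tau> - omega \<alpha> \<xi>1 t - omega \<alpha> (\<xi> - \<xi>1) (\<eta> - t) = c - a * (real_of_int t - t0)\<^sup>2" for t :: int
  proof -
    have "(real_of_int t)\<^sup>2 / \<xi>1 + (real_of_int \<eta> - real_of_int t)\<^sup>2 / x2
        = a * (real_of_int t - t0)\<^sup>2 + (real_of_int \<eta>)\<^sup>2 / \<xi>"
      unfolding a_def t0_def xi using quad_id[OF ab(4) x2b(1) ab(3)] by simp
    moreover have "omega \<alpha> \<xi>1 t = gp \<alpha> \<xi>1 + (real_of_int t)\<^sup>2 / \<xi>1"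
      by (simp add: omega_def gp_def)
    moreover have "omega \<alpha> (\<xi> - \<xi>1) (\<eta> - t) = gp \<alpha> x2 + (real_of_int \<eta> - real_of_int t)\<^sup>2 / x2"
      by (simp add: omega_def gp_def x2_def)
    moreover have "c = \<tau> - (real_of_int \<eta>)\<^sup>2 / \<xi> - (gp \<alpha> \<xi>1 + gp \<alpha> x2)"
      unfolding c_def cf_def Gf_def x2_def by simp
    ultimately show ?thesis by linarith
  qed
  have setq: "{\<eta>1. \<bar>\<tau> - omega \<alpha> \<xi>1 \<eta>1 - omega \<alpha> (\<xi> - \<xi>1) (\<eta> - \<eta>1)\<bar> \<le> M}
      = {t::int. \<bar>a * (real_of_int t - t0)\<^sup>2 - c\<bar> \<le> M}"
    by (rule Collect_cong) (simp only: key abs_minus_commute)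
  have lhs: "(\<integral>\<^sup>+\<eta>1. (if \<xi>1 \<in> A_set N1 \<and> \<xi> - \<xi>1 \<in> A_set N2 \<and> \<bar>\<tau> - omega \<alpha> \<xi>1 \<eta>1 - omega \<alpha> (\<xi> - \<xi>1) (\<eta> - \<eta>1)\<bar> \<le> M
            then 1 else (0::ennreal)) \<partial>count_space UNIV)
      = emeasure (count_space UNIV) {t::int. \<bar>a * (real_of_int t - t0)\<^sup>2 - c\<bar> \<le> M}"
  proof -
    have "(\<integral>\<^sup>+\<eta>1. (if \<xi>1 \<in> A_set N1 \<and> \<xi> - \<xi>1 \<in> A_set N2 \<and> \<bar>\<tau> - omega \<alpha> \<xi>1 \<eta>1 - omega \<alpha> (\<xi> - \<xi>1) (\<eta> - \<eta>1)\<bar> \<le> M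
            then 1 else (0::ennreal)) \<partial>count_space UNIV)
        = (\<integral>\<^sup>+\<eta>1. indicator {\<eta>1. \<bar>\<tau> - omega \<alpha> \<xi>1 \<eta>1 - omega \<alpha> (\<xi> - \<xi>1) (\<eta> - \<eta>1)\<bar> \<le> M} \<eta>1 \<partial>count_space UNIV)"
      using True by (intro nn_integral_cong) (auto simp: indicator_def)
    also have "\<dots> = emeasure (count_space UNIV) {\<eta>1. \<bar>\<tau> - omega \<alpha> \<xi>1 \<eta>1 - omega \<alpha> (\<xi> - \<xi>1) (\<eta> - \<eta>1)\<bar> \<le> M}"
      by (rule nn_integral_indicator) simp
    finally show ?thesis unfolding setq .
  qed
  show ?thesis
  proof (cases "c = 0")
    case True
    have "ennreal (4 * M * sqrt (8 * N2)) \<noteq> 0" using M N2 by simp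
    then have "2 + ennreal (4 * M * sqrt (8 * N2)) * isq c = \<infinity>" unfolding isq_def using True by simp
    then show ?thesis using \<open>\<xi>1 \<in> A_set N1 \<and> \<xi> - \<xi>1 \<in> A_set N2\<close> unfolding c_def by simp
  next
    case False
    have a0: "a \<noteq> 0" using ab(2) unfolding a_def .
    note cq = count_quad[OF a0 M False, of t0]
    have "emeasure (count_space UNIV) {t::int. \<bar>a * (real_of_int t - t0)\<^sup>2 - c\<bar> \<le> M}
        = ennreal (real (card {t::int. \<bar>a * (real_of_int t - t0)\<^sup>2 - c\<bar> \<le> M}))"
      using cq by (simp add: ennreal_of_nat_eq_real_of_nat)
    also have "\<dots> \<le> ennreal (2 + 4 * M / sqrt (\<bar>a\<bar> * \<bar>c\<bar>))"
      using cq by (intro ennreal_leI) simp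
    also have "\<dots> \<le> ennreal (2 + 4 * M * sqrt (8 * N2) * (1 / sqrt \<bar>c\<bar>))"
    proof (intro ennreal_leI add_left_mono)
      have ap: "\<bar>a\<bar> \<ge> 1 / (8 * N2)" using ab(1) unfolding a_def .
      have cp: "sqrt \<bar>c\<bar> > 0" using False by simp
      have "sqrt (1 / (8 * N2)) \<le> sqrt \<bar>a\<bar>" using ap by simp
      then have "sqrt (1 / (8 * N2)) * sqrt \<bar>c\<bar> \<le> sqrt (\<bar>a\<bar> * \<bar>c\<bar>)"
        using cp by (simp add: real_sqrt_mult mult_right_mono)
      moreover have "sqrt (1 / (8 * N2)) * sqrt \<bar>c\<bar> > 0" using cp N2 by simp
      ultimately have "4 * M / sqrt (\<bar>a\<bar> * \<bar>c\<bar>) \<le> 4 * M / (sqrt (1 / (8 * N2)) * sqrt \<bar>c\<bar>)"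
        using M by (intro divide_left_mono) (auto intro!: mult_pos_pos)
      also have "\<dots> = 4 * M * sqrt (8 * N2) * (1 / sqrt \<bar>c\<bar>)"
        using N2 by (simp add: real_sqrt_divide field_simps)
      finally show "4 * M / sqrt (\<bar>a\<bar> * \<bar>c\<bar>) \<le> 4 * M * sqrt (8 * N2) * (1 / sqrt \<bar>c\<bar>)" .
    qed
    also have "\<dots> = 2 + ennreal (4 * M * sqrt (8 * N2)) * isq c"
    proof -
      have k0: "4 * M * sqrt (8 * N2) \<ge> 0" "1 / sqrt \<bar>c\<bar> \<ge> 0" using M N2 by auto
      have "ennreal (2 + 4 * M * sqrt (8 * N2) * (1 / sqrt \<bar>c\<bar>)) = ennreal 2 + ennreal (4 * M * sqrt (8 * N2) * (1 / sqrt \<bar>c\<bar>))"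
        using k0 by (intro ennreal_plus) auto
      also have "ennreal (4 * M * sqrt (8 * N2) * (1 / sqrt \<bar>c\<bar>)) = ennreal (4 * M * sqrt (8 * N2)) * ennreal (1 / sqrt \<bar>c\<bar>)"
        using k0 by (rule ennreal_mult)
      also have "ennreal (1 / sqrt \<bar>c\<bar>) = isq c" unfolding isq_def using False by simp
      finally show ?thesis by simp
    qed
    finally show ?thesis using lhs \<open>\<xi>1 \<in> A_set N1 \<and> \<xi> - \<xi>1 \<in> A_set N2\<close> unfolding c_def by simp
  qed
qed

lemma cf_meas[measurable]: "(\<lambda>s. cf \<alpha> \<tau> \<xi> \<eta> s) \<in> borel_measurable borel"
  unfolding cf_def Gf_def gp_def by measurable

lemma cf_cont:
  assumes "s \<noteq> 0" "\<xi> - s \<noteq> 0"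
  shows "isCont (\<lambda>s. cf \<alpha> \<tau> \<xi> \<eta> s) s"
proof -
  have "isCont (Gf \<alpha> \<xi>) s" by (rule Gf_cont[OF assms])
  then show ?thesis unfolding cf_def by (intro continuous_intros) auto
qed

lemma piece_bound:
  assumes a: "\<alpha> \<ge> 2" and N1: "N1 > 0" and N2: "N2 > 0" and N12: "32 * N2 \<le> N1"
    and h2: "\<And>\<theta>. a2 \<le> \<theta> \<Longrightarrow> \<theta> \<le> b2 \<Longrightarrow> N1 / 4 \<le> \<bar>\<theta>\<bar>"
    and h1: "\<And>\<theta>. a1 \<le> \<theta> \<Longrightarrow> \<theta> \<le> b1 \<Longrightarrow> N2 / 4 \<le> \<bar>\<xi> - \<theta>\<bar> \<and> \<bar>\<xi> - \<theta>\<bar> \<le> 4 * N2"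
    and w: "b1 - a1 \<le> 4 * N2"
  shows "(\<integral>\<^sup>+s. indicator {max a1 a2..min b1 b2} s * isq (cf \<alpha> \<tau> \<xi> \<eta> s) \<partial>lborel)
           \<le> ennreal (8 * sqrt (N2 / (N1 / 4) powr \<alpha>))"
proof (cases "max a1 a2 \<le> min b1 b2")
  case False
  then have "{max a1 a2..min b1 b2} = {}" by simp
  then show ?thesis by simp
next
  case True
  define lo where "lo = max a1 a2"
  define hi where "hi = min b1 b2"
  define \<beta> where "\<beta> = (N1 / 4) powr \<alpha>"
  have b: "\<beta> > 0" unfolding \<beta>_def using N1 by simp
  have lh: "lo \<le> hi" using True unfolding lo_def hi_def .
  have piece: "\<theta> \<noteq> 0 \<and> \<xi> - \<theta> \<noteq> 0 \<and> 2 * \<bar>\<xi> - \<theta>\<bar> \<le> \<bar>\<theta>\<bar> \<and> N1 / 4 \<le> \<bar>\<theta>\<bar>"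
    if "lo \<le> \<theta>" "\<theta> \<le> hi" for \<theta>
  proof -
    have t2: "N1 / 4 \<le> \<bar>\<theta>\<bar>" using h2[of \<theta>] that unfolding lo_def hi_def by simp
    have t1: "N2 / 4 \<le> \<bar>\<xi> - \<theta>\<bar> \<and> \<bar>\<xi> - \<theta>\<bar> \<le> 4 * N2" using h1[of \<theta>] that unfolding lo_def hi_def by simp
    show ?thesis using t1 t2 N1 N2 N12 by auto
  qed
  have "(\<integral>\<^sup>+s. indicator {lo..hi} s * isq (cf \<alpha> \<tau> \<xi> \<eta> s) \<partial>lborel) \<le> ennreal (4 * sqrt ((hi - lo) / \<beta>))"
  proof (rule sing_int[OF lh b])
    fix s assume "lo \<le> s" "s \<le> hi"
    from piece[OF this] show "isCont (\<lambda>s. cf \<alpha> \<tau> \<xi> \<eta> s) s" by (intro cf_cont) auto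
  next
    fix s s' assume s: "lo \<le> s'" "s' \<le> s" "s \<le> hi"
    have "\<beta> * (s - s') \<le> Gf \<alpha> \<xi> s - Gf \<alpha> \<xi> s'"
      unfolding \<beta>_def by (rule Gf_mono[OF a N1 piece s])
    then show "\<beta> * (s - s') \<le> cf \<alpha> \<tau> \<xi> \<eta> s' - cf \<alpha> \<tau> \<xi> \<eta> s" unfolding cf_def by simp
  qed
  also have "\<dots> \<le> ennreal (8 * sqrt (N2 / \<beta>))"
  proof (intro ennreal_leI)
    have "hi - lo \<le> 4 * N2" using w unfolding lo_def hi_def by simp
    then have "(hi - lo) / \<beta> \<le> 4 * N2 / \<beta>" using b by (intro divide_right_mono) auto
    then have "sqrt ((hi - lo) / \<beta>) \<le> sqrt (4 * N2 / \<beta>)" by simp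
    also have "4 * N2 / \<beta> = 2\<^sup>2 * (N2 / \<beta>)" by simp
    also have "sqrt (2\<^sup>2 * (N2 / \<beta>)) = sqrt (2\<^sup>2) * sqrt (N2 / \<beta>)" by (rule real_sqrt_mult)
    also have "sqrt ((2::real)\<^sup>2) = 2" using real_sqrt_abs[of 2] by simp
    finally show "4 * sqrt ((hi - lo) / \<beta>) \<le> 8 * sqrt (N2 / \<beta>)" by simp
  qed
  finally show ?thesis unfolding lo_def hi_def \<beta>_def .
qed

lemma le_sum4: "(x::ennreal) = a \<or> x = b \<or> x = c \<or> x = d \<Longrightarrow> x \<le> a + b + c + d"
proof -
  have i: "\<And>u v::ennreal. u \<le> u + v" "\<And>u v::ennreal. u \<le> v + u" by (simp_all add: add_increasing2 add_increasing)
  have "a \<le> a + b + c + d" using i order_trans by metis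
  moreover have "b \<le> a + b + c + d" using i order_trans by metis
  moreover have "c \<le> a + b + c + d" using i order_trans by metis
  moreover have "d \<le> a + b + c + d" using i order_trans by metis
  ultimately show "x = a \<or> x = b \<or> x = c \<or> x = d \<Longrightarrow> x \<le> a + b + c + d" by auto
qed
lemma xi_int:
  assumes a: "\<alpha> \<ge> 2" and N1: "N1 > 0" and N2: "N2 > 0" and N12: "32 * N2 \<le> N1" and K: "K \<ge> 0"
  shows "(\<integral>\<^sup>+s. indicator {s. s \<in> A_set N1 \<and> \<xi> - s \<in> A_set N2} s * (2 + ennreal K * isq (cf \<alpha> \<tau> \<xi> \<eta> s)) \<partial>lborel)
     \<le> ennreal (15 * N2 + K * (32 * sqrt (N2 / (N1 / 4) powr \<alpha>)))"
proof -
  define X where "X = 8 * sqrt (N2 / (N1 / 4) powr \<alpha>)"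
  have X0: "X \<ge> 0" unfolding X_def using N1 N2 by simp
  define q where "q s = isq (cf \<alpha> \<tau> \<xi> \<eta> s)" for s
  have qm[measurable]: "q \<in> borel_measurable lborel" unfolding q_def by measurable
  define J1 where "J1 = {\<xi> - 4 * N2..\<xi> - N2 / 4}"
  define J2 where "J2 = {\<xi> + N2 / 4..\<xi> + 4 * N2}"
  define Sp where "Sp = {N1 / 4..4 * N1}"
  define Sm where "Sm = {- 4 * N1..- N1 / 4}"
  define P11 where "P11 = {max (\<xi> - 4 * N2) (N1 / 4)..min (\<xi> - N2 / 4) (4 * N1)}"
  define P12 where "P12 = {max (\<xi> - 4 * N2) (- 4 * N1)..min (\<xi> - N2 / 4) (- N1 / 4)}"
  define P21 where "P21 = {max (\<xi> + N2 / 4) (N1 / 4)..min (\<xi> + 4 * N2) (4 * N1)}"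
  define P22 where "P22 = {max (\<xi> + N2 / 4) (- 4 * N1)..min (\<xi> + 4 * N2) (- N1 / 4)}"
  define I where "I = {s. s \<in> A_set N1 \<and> \<xi> - s \<in> A_set N2}"
  have pw: "indicator I s * (2 + ennreal K * q s) \<le>
      (2 * indicator J1 s + 2 * indicator J2 s) + ennreal K * (indicator P11 s * q s + indicator P12 s * q s + indicator P21 s * q s + indicator P22 s * q s)" for s
  proof (cases "s \<in> I")
    case False then show ?thesis by simp
  next
    case True
    then have sJ: "s \<in> J1 \<or> s \<in> J2" and sS: "s \<in> Sp \<or> s \<in> Sm"
      unfolding I_def A_set_def J1_def J2_def Sp_def Sm_def by (auto simp: abs_if split: if_splits)
    have "2 \<le> 2 * indicator J1 s + 2 * (indicator J2 s :: ennreal)"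
      using sJ by (auto simp: indicator_def)
    moreover have "q s \<le> indicator P11 s * q s + indicator P12 s * q s + indicator P21 s * q s + indicator P22 s * q s"
    proof (rule le_sum4)
      show "q s = indicator P11 s * q s \<or> q s = indicator P12 s * q s \<or> q s = indicator P21 s * q s \<or> q s = indicator P22 s * q s"
        using sJ sS unfolding P11_def P12_def P21_def P22_def J1_def J2_def Sp_def Sm_def by (auto simp: indicator_def)
    qed
    ultimately show ?thesis using True by (simp add: add_mono mult_left_mono)
  qed
  have P_bound: "(\<integral>\<^sup>+s. indicator P s * q s \<partial>lborel) \<le> ennreal X" if "P \<in> {P11, P12, P21, P22}" for P
  proof -
    have h1a: "\<And>\<theta>. \<xi> - 4 * N2 \<le> \<theta> \<Longrightarrow> \<theta> \<le> \<xi> - N2 / 4 \<Longrightarrow> N2 / 4 \<le> \<bar>\<xi> - \<theta>\<bar> \<and> \<bar>\<xi> - \<theta>\<bar> \<le> 4 * N2" by auto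
    have h1b: "\<And>\<theta>. \<xi> + N2 / 4 \<le> \<theta> \<Longrightarrow> \<theta> \<le> \<xi> + 4 * N2 \<Longrightarrow> N2 / 4 \<le> \<bar>\<xi> - \<theta>\<bar> \<and> \<bar>\<xi> - \<theta>\<bar> \<le> 4 * N2" by auto
    have h2a: "\<And>\<theta>. N1 / 4 \<le> \<theta> \<Longrightarrow> \<theta> \<le> 4 * N1 \<Longrightarrow> N1 / 4 \<le> \<bar>\<theta>\<bar>" by auto
    have h2b: "\<And>\<theta>. - 4 * N1 \<le> \<theta> \<Longrightarrow> \<theta> \<le> - N1 / 4 \<Longrightarrow> N1 / 4 \<le> \<bar>\<theta>\<bar>" by auto
    have wa: "(\<xi> - N2 / 4) - (\<xi> - 4 * N2) \<le> 4 * N2" using N2 by simp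
    have wb: "(\<xi> + 4 * N2) - (\<xi> + N2 / 4) \<le> 4 * N2" using N2 by simp
    note pb = piece_bound[OF a N1 N2 N12, of _ _ _ _ \<xi> \<tau> \<eta>]
    from that show ?thesis
      unfolding q_def X_def P11_def P12_def P21_def P22_def
      using pb[OF h2a h1a wa] pb[OF h2b h1a wa] pb[OF h2a h1b wb] pb[OF h2b h1b wb] by auto
  qed
  have "(\<integral>\<^sup>+s. indicator I s * (2 + ennreal K * q s) \<partial>lborel)
      \<le> (\<integral>\<^sup>+s. (2 * indicator J1 s + 2 * indicator J2 s) + ennreal K * (indicator P11 s * q s + indicator P12 s * q s + indicator P21 s * q s + indicator P22 s * q s) \<partial>lborel)"
    by (rule nn_integral_mono) (rule pw)
  also have "\<dots> = (\<integral>\<^sup>+s. 2 * indicator J1 s + 2 * indicator J2 s \<partial>lborel) + (\<integral>\<^sup>+s. ennreal K * (indicator P11 s * q s + indicator P12 s * q s + indicator P21 s * q s + indicator P22 s * q s) \<partial>lborel)"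
    by (rule nn_integral_add) (auto simp: P11_def P12_def P21_def P22_def J1_def J2_def)
  also have "(\<integral>\<^sup>+s. 2 * indicator J1 s + 2 * indicator J2 s \<partial>lborel) = 2 * (\<integral>\<^sup>+s. indicator J1 s \<partial>lborel) + 2 * (\<integral>\<^sup>+s. indicator J2 s \<partial>lborel)"
    by (simp add: nn_integral_add nn_integral_cmult J1_def J2_def)
  also have "(\<integral>\<^sup>+s. indicator J1 s \<partial>lborel) = ennreal (15 * N2 / 4)"
    unfolding J1_def using N2 by simp
  also have "(\<integral>\<^sup>+s. indicator J2 s \<partial>lborel) = ennreal (15 * N2 / 4)"
    unfolding J2_def using N2 by simp
  also have "(\<integral>\<^sup>+s. ennreal K * (indicator P11 s * q s + indicator P12 s * q s + indicator P21 s * q s + indicator P22 s * q s) \<partial>lborel)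
     = ennreal K * ((\<integral>\<^sup>+s. indicator P11 s * q s \<partial>lborel) + (\<integral>\<^sup>+s. indicator P12 s * q s \<partial>lborel) + (\<integral>\<^sup>+s. indicator P21 s * q s \<partial>lborel) + (\<integral>\<^sup>+s. indicator P22 s * q s \<partial>lborel))"
    by (simp add: nn_integral_add nn_integral_cmult P11_def P12_def P21_def P22_def)
  also have "\<dots> \<le> ennreal K * (ennreal X + ennreal X + ennreal X + ennreal X)"
    using P_bound by (intro mult_left_mono add_mono) auto
  also have "2 * ennreal (15 * N2 / 4) + 2 * ennreal (15 * N2 / 4) + ennreal K * (ennreal X + ennreal X + ennreal X + ennreal X)
      = ennreal (15 * N2 + K * (4 * X))"
  proof -
    have "2 * ennreal (15 * N2 / 4) = ennreal 2 * ennreal (15 * N2 / 4)" by simp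
    also have "\<dots> = ennreal (2 * (15 * N2 / 4))" using N2 by (intro ennreal_mult[symmetric]) auto
    finally have e2: "2 * ennreal (15 * N2 / 4) = ennreal (15 * N2 / 2)" by simp
    have e3: "ennreal K * (ennreal X + ennreal X + ennreal X + ennreal X) = ennreal (K * (4 * X))"
      using K X0 by (simp add: ennreal_plus[symmetric] ennreal_mult[symmetric] del: ennreal_plus)
    show ?thesis unfolding e2 e3 using N2 K X0 by (simp add: ennreal_plus[symmetric] del: ennreal_plus)
  qed
  finally show ?thesis unfolding X_def q_def I_def by (simp add: mult.assoc)
qed

lemma I_meas[measurable]: "{s. s \<in> A_set N1 \<and> \<xi> - s \<in> A_set N2} \<in> sets (lborel::real measure)"
proof -
  have "{s. s \<in> A_set N1 \<and> \<xi> - s \<in> A_set N2} = {s \<in> space lborel. N1 / 4 \<le> \<bar>s\<bar> \<and> \<bar>s\<bar> \<le> 4 * N1 \<and> N2 / 4 \<le> \<bar>\<xi> - s\<bar> \<and> \<bar>\<xi> - s\<bar> \<le> 4 * N2}"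
    unfolding A_set_def by auto
  also have "\<dots> \<in> sets lborel" by measurable
  finally show ?thesis .
qed

lemma GB:
  assumes a: "\<alpha> \<ge> 2" and N1: "N1 > 0" and N2: "N2 > 0" and N12: "32 * N2 \<le> N1"
    and L1: "L1 > 0" and L2: "L2 > 0"
  shows "(\<integral>\<^sup>+y. indicator (D_set \<alpha> N1 L1) y * indicator (D_set \<alpha> N2 L2) (sub3 x y) \<partial>M3)
    \<le> ennreal (2 * min L1 L2 * (15 * N2 + (4 * (L1 + L2) * sqrt (8 * N2)) * (32 * sqrt (N2 / (N1 / 4) powr \<alpha>))))"
proof -
  obtain \<tau> \<xi> \<eta> where x: "x = (\<tau>, \<xi>, \<eta>)" by (cases x) auto
  define M where "M = L1 + L2"
  have M0: "M > 0" unfolding M_def using L1 L2 by simp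
  define K1 where "K1 = 4 * M * sqrt (8 * N2)"
  have K0: "K1 \<ge> 0" unfolding K1_def using M0 N2 by simp
  define Lm where "Lm = min L1 L2"
  have Lm0: "Lm \<ge> 0" unfolding Lm_def using L1 L2 by simp
  define Q where "Q \<xi>1 \<eta>1 \<longleftrightarrow> \<xi>1 \<in> A_set N1 \<and> \<xi> - \<xi>1 \<in> A_set N2 \<and> \<bar>\<tau> - omega \<alpha> \<xi>1 \<eta>1 - omega \<alpha> (\<xi> - \<xi>1) (\<eta> - \<eta>1)\<bar> \<le> M" for \<xi>1 \<eta>1
  define I where "I = {s. s \<in> A_set N1 \<and> \<xi> - s \<in> A_set N2}"
  have hm: "(\<lambda>y. indicator (D_set \<alpha> N1 L1) y * indicator (D_set \<alpha> N2 L2) (sub3 x y) :: ennreal) \<in> borel_measurable M3"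
    by measurable
  have "(\<integral>\<^sup>+y. indicator (D_set \<alpha> N1 L1) y * indicator (D_set \<alpha> N2 L2) (sub3 x y) \<partial>M3)
     = (\<integral>\<^sup>+\<xi>1. \<integral>\<^sup>+\<eta>1. \<integral>\<^sup>+\<tau>1. indicator (D_set \<alpha> N1 L1) (\<tau>1, \<xi>1, \<eta>1) * indicator (D_set \<alpha> N2 L2) (\<tau> - \<tau>1, \<xi> - \<xi>1, \<eta> - \<eta>1) \<partial>lborel \<partial>count_space UNIV \<partial>lborel)"
    using M3_iter2[OF hm] by (simp add: sub3_def x)
  also have "\<dots> \<le> (\<integral>\<^sup>+\<xi>1. \<integral>\<^sup>+\<eta>1. ennreal (2 * Lm) * (if Q \<xi>1 \<eta>1 then 1 else 0) \<partial>count_space UNIV \<partial>lborel)"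
  proof (intro nn_integral_mono)
    fix \<xi>1 \<eta>1
    show "(\<integral>\<^sup>+\<tau>1. indicator (D_set \<alpha> N1 L1) (\<tau>1, \<xi>1, \<eta>1) * indicator (D_set \<alpha> N2 L2) (\<tau> - \<tau>1, \<xi> - \<xi>1, \<eta> - \<eta>1) \<partial>lborel)
        \<le> ennreal (2 * Lm) * (if Q \<xi>1 \<eta>1 then 1 else 0)"
    proof -
      have tb: "(\<integral>\<^sup>+\<tau>1. indicator (D_set \<alpha> N1 L1) (\<tau>1, \<xi>1, \<eta>1) * indicator (D_set \<alpha> N2 L2) (\<tau> - \<tau>1, \<xi> - \<xi>1, \<eta> - \<eta>1) \<partial>lborel)
        \<le> (if \<xi>1 \<in> A_set N1 \<and> \<xi> - \<xi>1 \<in> A_set N2 \<and> \<bar>\<tau> - omega \<alpha> \<xi>1 \<eta>1 - omega \<alpha> (\<xi> - \<xi>1) (\<eta> - \<eta>1)\<bar> \<le> L1 + L2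
         then ennreal (2 * min L1 L2) else 0)"
        by (rule tau_bound) (use L1 L2 in auto)
      also have "\<dots> = ennreal (2 * Lm) * (if Q \<xi>1 \<eta>1 then 1 else 0)"
        unfolding Q_def Lm_def M_def by simp
      finally show ?thesis .
    qed
  qed
  also have "\<dots> = (\<integral>\<^sup>+\<xi>1. ennreal (2 * Lm) * \<integral>\<^sup>+\<eta>1. (if Q \<xi>1 \<eta>1 then 1 else 0) \<partial>count_space UNIV \<partial>lborel)"
    by (intro nn_integral_cong nn_integral_cmult) simp
  also have "\<dots> \<le> (\<integral>\<^sup>+\<xi>1. ennreal (2 * Lm) * (indicator I \<xi>1 * (2 + ennreal K1 * isq (cf \<alpha> \<tau> \<xi> \<eta> \<xi>1))) \<partial>lborel)"
  proof (intro nn_integral_mono mult_left_mono)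
    fix \<xi>1
    show "(\<integral>\<^sup>+\<eta>1. (if Q \<xi>1 \<eta>1 then 1 else 0) \<partial>count_space UNIV) \<le> indicator I \<xi>1 * (2 + ennreal K1 * isq (cf \<alpha> \<tau> \<xi> \<eta> \<xi>1))"
      using eta_bound[OF N1 N2 N12 M0, of \<xi>1 \<xi> \<tau> \<alpha> \<eta>] unfolding Q_def I_def K1_def by simp
  qed simp
  also have "\<dots> = ennreal (2 * Lm) * (\<integral>\<^sup>+\<xi>1. indicator I \<xi>1 * (2 + ennreal K1 * isq (cf \<alpha> \<tau> \<xi> \<eta> \<xi>1)) \<partial>lborel)"
    by (rule nn_integral_cmult) (unfold I_def, measurable)
  also have "\<dots> \<le> ennreal (2 * Lm) * ennreal (15 * N2 + K1 * (32 * sqrt (N2 / (N1 / 4) powr \<alpha>)))"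
    using xi_int[OF a N1 N2 N12 K0, of \<xi> \<tau> \<eta>] unfolding I_def by (intro mult_left_mono) auto
  also have "\<dots> = ennreal (2 * Lm * (15 * N2 + K1 * (32 * sqrt (N2 / (N1 / 4) powr \<alpha>))))"
    using Lm0 K0 N1 N2 by (intro ennreal_mult[symmetric]) auto
  finally show ?thesis unfolding Lm_def K1_def M_def .
qed

lemma jb_ge: "t \<ge> 0 \<Longrightarrow> 1 + t \<le> 2 * jb t"
proof -
  assume t: "t \<ge> 0"
  have e1: "(1 + t)\<^sup>2 = 1 + 2 * t + t * t" by (simp add: power2_eq_square algebra_simps)
  have e2: "(2 * sqrt (1 + t\<^sup>2))\<^sup>2 = 4 * (1 + t * t)" by (simp add: power_mult_distrib power2_eq_square)
  have h: "0 \<le> (t - 1) * (t - 1)" by simp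
  have h2: "(t - 1) * (t - 1) = t * t - 2 * t + 1" by (simp add: algebra_simps)
  have h3: "0 \<le> t * t" by simp
  have e3: "4 * (1 + t * t) = 4 + 4 * (t * t)" by simp
  have "(1 + t)\<^sup>2 \<le> (2 * sqrt (1 + t\<^sup>2))\<^sup>2" unfolding e1 e2 e3 using h h2 h3 by linarith
  then have "1 + t \<le> 2 * sqrt (1 + t\<^sup>2)" by (rule power2_le_imp_le) simp
  then show ?thesis unfolding jb_def .
qed

lemma final_arith:
  fixes N1 N2 L1 L2 \<alpha> :: real
  assumes N1: "N1 > 0" and N2: "N2 > 0" and L1: "L1 \<ge> 1" and L2: "L2 \<ge> 1" and a: "\<alpha> \<ge> 0"
  shows "2 * min L1 L2 * (15 * N2 + (4 * (L1 + L2) * sqrt (8 * N2)) * (32 * sqrt (N2 / (N1 / 4) powr \<alpha>)))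
    \<le> (4 * (15 + 768 * 4 powr (\<alpha> / 2))) * (N2 * min L1 L2 * jb (max L1 L2 / N1 powr (\<alpha> / 2)))"
proof -
  define Y where "Y = 4 powr (\<alpha> / 2)"
  define P where "P = N1 powr (\<alpha> / 2)"
  define t where "t = max L1 L2 / P"
  define Lm where "Lm = min L1 L2"
  have Y1: "Y \<ge> 1" unfolding Y_def using a by (intro ge_one_powr_ge_zero) auto
  have P0: "P > 0" unfolding P_def using N1 by simp
  have t0: "t \<ge> 0" unfolding t_def using P0 L1 L2 by simp
  have Lm0: "Lm > 0" unfolding Lm_def using L1 L2 by simp
  have sb: "sqrt ((N1 / 4) powr \<alpha>) = P / Y"
  proof -
    have "sqrt ((N1 / 4) powr \<alpha>) = ((N1 / 4) powr \<alpha>) powr (1/2)" using N1 by (simp add: powr_half_sqrt)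
    also have "\<dots> = (N1 / 4) powr (\<alpha> / 2)" by (simp add: powr_powr)
    also have "\<dots> = P / Y" unfolding P_def Y_def using N1 by (simp add: powr_divide)
    finally show ?thesis .
  qed
  have bpos: "(N1 / 4) powr \<alpha> > 0" using N1 by simp
  have f1: "sqrt (8 * N2) * sqrt (N2 / (N1 / 4) powr \<alpha>) = sqrt 8 * N2 * Y / P"
  proof -
    have "sqrt (8 * N2) * sqrt (N2 / (N1 / 4) powr \<alpha>) = sqrt 8 * (sqrt N2 * sqrt N2) / sqrt ((N1 / 4) powr \<alpha>)"
      by (simp add: real_sqrt_mult real_sqrt_divide)
    also have "sqrt N2 * sqrt N2 = N2" using N2 by simp
    finally show ?thesis unfolding sb using P0 Y1 by (simp add: field_simps)
  qed
  have s8: "sqrt 8 \<le> (3::real)"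
    by (rule real_le_lsqrt) auto
  have LL: "L1 + L2 \<le> 2 * max L1 L2" by simp
  have inner: "(4 * (L1 + L2) * sqrt (8 * N2)) * (32 * sqrt (N2 / (N1 / 4) powr \<alpha>)) \<le> 768 * Y * N2 * t"
  proof -
    have "(4 * (L1 + L2) * sqrt (8 * N2)) * (32 * sqrt (N2 / (N1 / 4) powr \<alpha>))
        = 128 * (L1 + L2) * (sqrt (8 * N2) * sqrt (N2 / (N1 / 4) powr \<alpha>))" by simp
    also have "\<dots> = 128 * (L1 + L2) * sqrt 8 * (N2 * Y / P)" unfolding f1 by simp
    also have "\<dots> \<le> 128 * (2 * max L1 L2) * 3 * (N2 * Y / P)"
    proof -
      have q: "N2 * Y / P \<ge> 0" using N2 Y1 P0 by simp
      have "(L1 + L2) * sqrt 8 \<le> (2 * max L1 L2) * 3"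
        using LL s8 L1 L2 by (intro mult_mono) auto
      then have "128 * ((L1 + L2) * sqrt 8) * (N2 * Y / P) \<le> 128 * ((2 * max L1 L2) * 3) * (N2 * Y / P)"
        using q by (intro mult_right_mono mult_left_mono) auto
      then show ?thesis by (simp only: mult.assoc)
    qed
    also have "\<dots> = 768 * Y * N2 * t" unfolding t_def using P0 by (simp add: field_simps)
    finally show ?thesis .
  qed
  have "2 * Lm * (15 * N2 + (4 * (L1 + L2) * sqrt (8 * N2)) * (32 * sqrt (N2 / (N1 / 4) powr \<alpha>)))
      \<le> 2 * Lm * (15 * N2 + 768 * Y * N2 * t)"
    using inner Lm0 by (intro mult_left_mono) auto
  also have "\<dots> = 2 * Lm * N2 * (15 + 768 * Y * t)" by (simp add: algebra_simps)
  also have "\<dots> \<le> 2 * Lm * N2 * ((15 + 768 * Y) * (1 + t))"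
  proof -
    have "15 + 768 * Y * t \<le> (15 + 768 * Y) * (1 + t)" using Y1 t0 by (simp add: algebra_simps)
    then show ?thesis using Lm0 N2 by (intro mult_left_mono) auto
  qed
  also have "\<dots> \<le> 2 * Lm * N2 * ((15 + 768 * Y) * (2 * jb t))"
    using jb_ge[OF t0] Lm0 N2 Y1 by (intro mult_left_mono) auto
  also have "\<dots> = (4 * (15 + 768 * Y)) * (N2 * Lm * jb t)" by simp
  finally show ?thesis unfolding Y_def Lm_def t_def P_def .
qed

lemma L2norm_nonneg: "L2norm f \<ge> 0"
proof -
  have "0 \<le> (\<integral>x. (cmod (f x))\<^sup>2 \<partial>M3)" by (rule integral_nonneg_AE) auto
  then show ?thesis unfolding L2norm_def by simp
qed

theorem lemma4p5:
  fixes \<alpha> :: real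
  assumes "\<alpha> \<ge> 2"
  shows "\<forall>K>0. \<forall>c1>0. \<exists>c0>0. \<exists>C>0.
    \<forall>N1 N2 L1 L2 Dst :: real. \<forall>f1 f2 :: pt \<Rightarrow> complex.
      dyadic_Z N1 \<longrightarrow> dyadic_Z N2 \<longrightarrow> N2 \<le> c0 * N1 \<longrightarrow> N1 \<ge> c1 \<longrightarrow>
      dyadic_N0 L1 \<longrightarrow> dyadic_N0 L2 \<longrightarrow> dyadic_N Dst \<longrightarrow>
      in_L2 f1 \<longrightarrow> in_L2 f2 \<longrightarrow>
      supp3 f1 \<subseteq> D_set \<alpha> N1 L1 \<longrightarrow> supp3 f2 \<subseteq> D_set \<alpha> N2 L2 \<longrightarrow>
      (\<forall>\<tau>1 \<xi>1 \<eta>1 \<tau>2 \<xi>2 \<eta>2. (\<tau>1, \<xi>1, \<eta>1) \<in> supp3 f1 \<longrightarrow> (\<tau>2, \<xi>2, \<eta>2) \<in> supp3 f2 \<longrightarrow>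
         \<bar>real_of_int \<eta>1 / \<xi>1 - real_of_int \<eta>2 / \<xi>2\<bar> \<le> K * Dst) \<longrightarrow>
      in_L2 (conv3 f1 f2) \<and>
      L2norm (conv3 f1 f2) \<le> C * ln Dst * sqrt N2 * sqrt (min L1 L2)
         * sqrt (jb (max L1 L2 / N1 powr (\<alpha> / 2))) * L2norm f1 * L2norm f2"
proof -
  have a: "\<alpha> \<ge> 2" by fact
  define Cg where "Cg = 4 * (15 + 768 * 4 powr (\<alpha> / 2))"
  define C where "C = sqrt Cg / ln 2"
  have Cg0: "Cg > 0" unfolding Cg_def by (simp add: add_pos_nonneg)
  have C0: "C > 0" unfolding C_def using Cg0 by simp
  have main: "in_L2 (conv3 f1 f2) \<and>
      L2norm (conv3 f1 f2) \<le> C * ln Dst * sqrt N2 * sqrt (min L1 L2)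
         * sqrt (jb (max L1 L2 / N1 powr (\<alpha> / 2))) * L2norm f1 * L2norm f2"
    if hN1: "dyadic_Z N1" and hN2: "dyadic_Z N2" and h12: "N2 \<le> 1 / 32 * N1"
      and hL1: "dyadic_N0 L1" and hL2: "dyadic_N0 L2" and hD: "dyadic_N Dst"
      and i1: "in_L2 f1" and i2: "in_L2 f2"
      and s1: "supp3 f1 \<subseteq> D_set \<alpha> N1 L1" and s2: "supp3 f2 \<subseteq> D_set \<alpha> N2 L2"
    for N1 N2 L1 L2 Dst :: real and f1 f2 :: "pt \<Rightarrow> complex"
  proof -
    have N1: "N1 > 0" using hN1 unfolding dyadic_Z_def by auto
    have N2: "N2 > 0" using hN2 unfolding dyadic_Z_def by auto
    have N12: "32 * N2 \<le> N1" using h12 by simp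
    have L1: "L1 \<ge> 1" using hL1 unfolding dyadic_N0_def by auto
    have L2: "L2 \<ge> 1" using hL2 unfolding dyadic_N0_def by auto
    have D2: "Dst \<ge> 2"
    proof -
      obtain k :: nat where k: "k \<ge> 1" "Dst = 2 ^ k" using hD unfolding dyadic_N_def by auto
      have "(2::real) ^ 1 \<le> 2 ^ k" using k(1) by (intro power_increasing) auto
      then show ?thesis using k by simp
    qed
    define B0 where "B0 = 2 * min L1 L2 * (15 * N2 + (4 * (L1 + L2) * sqrt (8 * N2)) * (32 * sqrt (N2 / (N1 / 4) powr \<alpha>)))"
    have B00: "B0 \<ge> 0" unfolding B0_def using L1 L2 N1 N2 by simp
    have cl: "in_L2 (conv3 f1 f2) \<and> L2norm (conv3 f1 f2) \<le> sqrt B0 * L2norm f1 * L2norm f2"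
    proof (rule conv_L2[OF i1 i2 s1 s2 B00])
      fix x
      show "(\<integral>\<^sup>+y. indicator (D_set \<alpha> N1 L1) y * indicator (D_set \<alpha> N2 L2) (sub3 x y) \<partial>M3) \<le> ennreal B0"
        unfolding B0_def by (rule GB[OF a N1 N2 N12]) (use L1 L2 in auto)
    qed auto
    define J where "J = sqrt N2 * sqrt (min L1 L2) * sqrt (jb (max L1 L2 / N1 powr (\<alpha> / 2)))"
    have J0: "J \<ge> 0" unfolding J_def using N2 L1 L2 by (simp add: jb_def)
    have "B0 \<le> Cg * (N2 * min L1 L2 * jb (max L1 L2 / N1 powr (\<alpha> / 2)))"
      unfolding B0_def Cg_def using final_arith[OF N1 N2 L1 L2] a by simp
    then have "sqrt B0 \<le> sqrt (Cg * (N2 * min L1 L2 * jb (max L1 L2 / N1 powr (\<alpha> / 2))))" by simp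
    also have "\<dots> = sqrt Cg * J" unfolding J_def by (simp add: real_sqrt_mult mult.assoc)
    also have "\<dots> \<le> C * ln Dst * J"
    proof (rule mult_right_mono[OF _ J0])
      have l2: "ln 2 > (0::real)" by simp
      have "ln 2 \<le> ln Dst" using D2 by simp
      then have "sqrt Cg * ln 2 \<le> sqrt Cg * ln Dst" using Cg0 by (intro mult_left_mono) auto
      then show "sqrt Cg \<le> C * ln Dst" unfolding C_def using l2 by (simp add: field_simps)
    qed
    finally have sB: "sqrt B0 \<le> C * ln Dst * J" .
    have F: "L2norm f1 * L2norm f2 \<ge> 0" using L2norm_nonneg by simp
    have "L2norm (conv3 f1 f2) \<le> sqrt B0 * (L2norm f1 * L2norm f2)" using cl by (simp add: mult.assoc)
    also have "\<dots> \<le> (C * ln Dst * J) * (L2norm f1 * L2norm f2)" using sB F by (rule mult_right_mono)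
    also have "\<dots> = C * ln Dst * sqrt N2 * sqrt (min L1 L2)
         * sqrt (jb (max L1 L2 / N1 powr (\<alpha> / 2))) * L2norm f1 * L2norm f2" unfolding J_def by (simp add: mult.assoc)
    finally show ?thesis using cl by simp
  qed
  show ?thesis
  proof (intro allI impI)
    fix K c1 :: real
    assume "K > 0" "c1 > 0"
    show "\<exists>c0>0. \<exists>C>0.
    \<forall>N1 N2 L1 L2 Dst :: real. \<forall>f1 f2 :: pt \<Rightarrow> complex.
      dyadic_Z N1 \<longrightarrow> dyadic_Z N2 \<longrightarrow> N2 \<le> c0 * N1 \<longrightarrow> N1 \<ge> c1 \<longrightarrow>
      dyadic_N0 L1 \<longrightarrow> dyadic_N0 L2 \<longrightarrow> dyadic_N Dst \<longrightarrow>
      in_L2 f1 \<longrightarrow> in_L2 f2 \<longrightarrow>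
      supp3 f1 \<subseteq> D_set \<alpha> N1 L1 \<longrightarrow> supp3 f2 \<subseteq> D_set \<alpha> N2 L2 \<longrightarrow>
      (\<forall>\<tau>1 \<xi>1 \<eta>1 \<tau>2 \<xi>2 \<eta>2. (\<tau>1, \<xi>1, \<eta>1) \<in> supp3 f1 \<longrightarrow> (\<tau>2, \<xi>2, \<eta>2) \<in> supp3 f2 \<longrightarrow>
         \<bar>real_of_int \<eta>1 / \<xi>1 - real_of_int \<eta>2 / \<xi>2\<bar> \<le> K * Dst) \<longrightarrow>
      in_L2 (conv3 f1 f2) \<and>
      L2norm (conv3 f1 f2) \<le> C * ln Dst * sqrt N2 * sqrt (min L1 L2)
         * sqrt (jb (max L1 L2 / N1 powr (\<alpha> / 2))) * L2norm f1 * L2norm f2"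
      apply (rule exI[of _ "1/32"])
      apply (rule conjI)
       apply simp
      apply (rule exI[of _ C])
      apply (rule conjI)
       apply (rule C0)
      apply (intro allI impI)
      apply (rule main)
               apply assumption+
      done
  qed
qed

end
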